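(* Let $$A=\bigoplus_{i\in I}B(H_{\mathrm{in},i}),\quad B=\bigoplus_{j\in J}B(H_{\mathrm{out},j}),\quad C=\bigoplus_{k\in K}B(K_{\mathrm{in},k}),\quad D=\bigoplus_{l\in L}B(K_{\mathrm{out},l}),$$ and let $\mathcal S:\underline{\mathrm{Hom}}(A,B)\to\underline{\mathrm{Hom}}(C,D)$ be a deterministic supermap. Then there exists a unital completely positive map $\mathcal N:A\to C$ such that, for every positive $\rho\in C$ with $\mathrm{Tr}(\rho)=1$, $$\mathcal S_*(1_D\boxtimes\rho)=1_B\boxtimes\mathcal N_*(\rho).$$ Here $\mathcal S_*$ and $\mathcal N_*$ are the duals of $\mathcal S$ and $\mathcal N$.
   Context: Throughout, all Hilbert spaces are finite-dimensional and nonzero, and all index sets are finite and nonempty. **Multimatrix algebras.** A finite-dimensional $C^*$-algebra is written as $A=\bigoplus_{i\in I}B(H_i)$, with elements $X=(X_i)_{i\in I}$. Its trace is $\mathrm{Tr}(X)=\sum_i\mathrm{Tr}(X_i)$, and $X\ge 0$ means every block is positive semidefinite. **The algebra $\underline{\mathrm{Hom}}$ and (TP).** For $A=\bigoplus_{i\in I}B(H_i)$ and $B=\bigoplus_{j\in J}B(K_j)$, set $$\underline{\mathrm{Hom}}(A,B):=\bigoplus_{(j,i)\in J\times I}B(K_j\otimes H_i).$$ An element $X\in\underline{\mathrm{Hom}}(A,B)$ satisfies **(TP)** if $\sum_{j\in J}\mathrm{Tr}_{K_j}(X_{ji})=1_{H_i}$ for every $i\in I$. These positive (TP) elements are exactly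 the Choi operators of the channels (CPTP maps) $A\to B$. **Notation.** For $\rho=(\rho_i)_i\in A$, write $1_B\boxtimes\rho:=(1_{K_j}\otimes\rho_i)_{(j,i)}\in\underline{\mathrm{Hom}}(A,B)$. **Deterministic supermaps.** A deterministic supermap is a completely positive linear map $\mathcal S:\underline{\mathrm{Hom}}(A,B)\to\underline{\mathrm{Hom}}(C,D)$ sending every positive element satisfying (TP) to an element satisfying (TP). **Duals.** For a linear map $\Phi:\mathcal A\to\mathcal B$ between such algebras, the dual $\Phi_*:\mathcal B\to\mathcal A$ is the unique linear map with $$\mathrm{Tr}(\Phi_*(y)\,x)=\mathrm{Tr}(y\,\Phi(x))\quad\text{for all } x\in\mathcal A,\ y\in\mathcal B.$$ If $\Phi$ is CP then $\Phi_*$ is CP. A CP map $\Phi$ is unital iff $\Phi_*$ is trace-preserving. *)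

theory Defs
  imports Complex_Main "Jordan_Normal_Form.Matrix"
begin

text \<open>A multimatrix algebra \<open>\<Oplus>_{i\<in>I} B(C^{d i})\<close> is described by a finite nonempty
index set \<open>I\<close> and block dimensions \<open>d i > 0\<close>. Its elements are families
\<open>X :: 'i \<Rightarrow> complex mat\<close> with \<open>X i\<close> a \<open>d i \<times> d i\<close> matrix for \<open>i \<in> I\<close> and
(for uniqueness of representation) \<open>X i = 0_m 0 0\<close> outside \<open>I\<close>.\<close>

definition mm_valid :: "'i set \<Rightarrow> ('i \<Rightarrow> nat) \<Rightarrow> bool" where
  "mm_valid I d \<longleftrightarrow> finite I \<and> I \<noteq> {} \<and> (\<forall>i\<in>I. 0 < d i)"

definition mm_carrier :: "'i set \<Rightarrow> ('i \<Rightarrow> nat) \<Rightarrow> ('i \<Rightarrow> complex mat) set" where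
  "mm_carrier I d = {X. (\<forall>i\<in>I. X i \<in> carrier_mat (d i) (d i)) \<and> (\<forall>i. i \<notin> I \<longrightarrow> X i = 0\<^sub>m 0 0)}"

definition mm_add :: "('i \<Rightarrow> complex mat) \<Rightarrow> ('i \<Rightarrow> complex mat) \<Rightarrow> ('i \<Rightarrow> complex mat)" where
  "mm_add X Y = (\<lambda>i. X i + Y i)"

definition mm_smult :: "complex \<Rightarrow> ('i \<Rightarrow> complex mat) \<Rightarrow> ('i \<Rightarrow> complex mat)" where
  "mm_smult c X = (\<lambda>i. c \<cdot>\<^sub>m X i)"

definition mm_mult :: "('i \<Rightarrow> complex mat) \<Rightarrow> ('i \<Rightarrow> complex mat) \<Rightarrow> ('i \<Rightarrow> complex mat)" where
  "mm_mult X Y = (\<lambda>i. X i * Y i)"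

definition mat_tr :: "complex mat \<Rightarrow> complex" where
  "mat_tr M = (\<Sum>r<dim_row M. M $$ (r, r))"

definition mm_trace :: "'i set \<Rightarrow> ('i \<Rightarrow> complex mat) \<Rightarrow> complex" where
  "mm_trace I X = (\<Sum>i\<in>I. mat_tr (X i))"

definition mm_one :: "'i set \<Rightarrow> ('i \<Rightarrow> nat) \<Rightarrow> ('i \<Rightarrow> complex mat)" where
  "mm_one I d = (\<lambda>i. if i \<in> I then 1\<^sub>m (d i) else 0\<^sub>m 0 0)"

definition psd_mat :: "nat \<Rightarrow> complex mat \<Rightarrow> bool" where
  "psd_mat n M \<longleftrightarrow> M \<in> carrier_mat n n \<and>
     (\<forall>v :: nat \<Rightarrow> complex.
        Im (\<Sum>r<n. \<Sum>s<n. cnj (v r) * M $$ (r, s) * v s) = 0 \<and>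
        Re (\<Sum>r<n. \<Sum>s<n. cnj (v r) * M $$ (r, s) * v s) \<ge> 0)"

definition mm_pos :: "'i set \<Rightarrow> ('i \<Rightarrow> nat) \<Rightarrow> ('i \<Rightarrow> complex mat) \<Rightarrow> bool" where
  "mm_pos I d X \<longleftrightarrow> X \<in> mm_carrier I d \<and> (\<forall>i\<in>I. psd_mat (d i) (X i))"

definition mm_linear ::
  "'i set \<Rightarrow> ('i \<Rightarrow> nat) \<Rightarrow> 'k set \<Rightarrow> ('k \<Rightarrow> nat) \<Rightarrow>
   (('i \<Rightarrow> complex mat) \<Rightarrow> ('k \<Rightarrow> complex mat)) \<Rightarrow> bool" where
  "mm_linear I d K e \<Phi> \<longleftrightarrow>
     (\<forall>X\<in>mm_carrier I d. \<Phi> X \<in> mm_carrier K e) \<and>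
     (\<forall>X\<in>mm_carrier I d. \<forall>Y\<in>mm_carrier I d. \<Phi> (mm_add X Y) = mm_add (\<Phi> X) (\<Phi> Y)) \<and>
     (\<forall>c. \<forall>X\<in>mm_carrier I d. \<Phi> (mm_smult c X) = mm_smult c (\<Phi> X))"

text \<open>An element of \<open>M_n(A) = \<Oplus>_i B(C^n \<otimes> C^{d i})\<close>
is a family of \<open>n d_i \<times> n d_i\<close> matrices; index \<open>(a, r)\<close> of \<open>C^n \<otimes> C^{d i}\<close> is \<open>a * d i + r\<close>.
\<open>mm_block d Y a b\<close> is the \<open>(a,b)\<close> block, an element of \<open>A\<close>.\<close>
definition mm_block ::
  "'i set \<Rightarrow> ('i \<Rightarrow> nat) \<Rightarrow> ('i \<Rightarrow> complex mat) \<Rightarrow> nat \<Rightarrow> nat \<Rightarrow> ('i \<Rightarrow> complex mat)" where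
  "mm_block I d Y a b = (\<lambda>i. if i \<in> I then
      mat (d i) (d i) (\<lambda>(r, s). Y i $$ (a * d i + r, b * d i + s)) else 0\<^sub>m 0 0)"

definition mm_ampl ::
  "'i set \<Rightarrow> ('i \<Rightarrow> nat) \<Rightarrow> 'k set \<Rightarrow> ('k \<Rightarrow> nat) \<Rightarrow> nat \<Rightarrow>
   (('i \<Rightarrow> complex mat) \<Rightarrow> ('k \<Rightarrow> complex mat)) \<Rightarrow>
   ('i \<Rightarrow> complex mat) \<Rightarrow> ('k \<Rightarrow> complex mat)" where
  "mm_ampl I d K e n \<Phi> Y = (\<lambda>k. if k \<in> K then
      mat (n * e k) (n * e k) (\<lambda>(r, s).
        \<Phi> (mm_block I d Y (r div e k) (s div e k)) k $$ (r mod e k, s mod e k))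
    else 0\<^sub>m 0 0)"

definition mm_CP ::
  "'i set \<Rightarrow> ('i \<Rightarrow> nat) \<Rightarrow> 'k set \<Rightarrow> ('k \<Rightarrow> nat) \<Rightarrow>
   (('i \<Rightarrow> complex mat) \<Rightarrow> ('k \<Rightarrow> complex mat)) \<Rightarrow> bool" where
  "mm_CP I d K e \<Phi> \<longleftrightarrow> mm_linear I d K e \<Phi> \<and>
     (\<forall>n>0. \<forall>Y. mm_pos I (\<lambda>i. n * d i) Y \<longrightarrow>
        mm_pos K (\<lambda>k. n * e k) (mm_ampl I d K e n \<Phi> Y))"

definition mm_unital ::
  "'i set \<Rightarrow> ('i \<Rightarrow> nat) \<Rightarrow> 'k set \<Rightarrow> ('k \<Rightarrow> nat) \<Rightarrow>
   (('i \<Rightarrow> complex mat) \<Rightarrow> ('k \<Rightarrow> complex mat)) \<Rightarrow> bool" where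
  "mm_unital I d K e \<Phi> \<longleftrightarrow> \<Phi> (mm_one I d) = mm_one K e"

definition mm_dual ::
  "'i set \<Rightarrow> ('i \<Rightarrow> nat) \<Rightarrow> 'k set \<Rightarrow> ('k \<Rightarrow> nat) \<Rightarrow>
   (('i \<Rightarrow> complex mat) \<Rightarrow> ('k \<Rightarrow> complex mat)) \<Rightarrow>
   (('k \<Rightarrow> complex mat) \<Rightarrow> ('i \<Rightarrow> complex mat)) \<Rightarrow> bool" where
  "mm_dual I d K e \<Phi> \<Psi> \<longleftrightarrow>
     (\<forall>y\<in>mm_carrier K e. \<Psi> y \<in> mm_carrier I d) \<and>
     (\<forall>x\<in>mm_carrier I d. \<forall>y\<in>mm_carrier K e.
        mm_trace I (mm_mult (\<Psi> y) x) = mm_trace K (mm_mult y (\<Phi> x)))"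

text \<open>\<open>Hom(A,B) = \<Oplus>_{(j,i) \<in> J \<times> I} B(K_j \<otimes> H_i)\<close>; block \<open>(j,i)\<close> has dimension
\<open>dB j * dA i\<close>, with index \<open>(p, q)\<close> of \<open>K_j \<otimes> H_i\<close> encoded as \<open>p * dA i + q\<close>.\<close>
definition hom_dim :: "('i \<Rightarrow> nat) \<Rightarrow> ('j \<Rightarrow> nat) \<Rightarrow> ('j \<times> 'i \<Rightarrow> nat)" where
  "hom_dim dA dB = (\<lambda>(j, i). dB j * dA i)"

definition ptrace1 :: "nat \<Rightarrow> nat \<Rightarrow> complex mat \<Rightarrow> complex mat" where
  "ptrace1 m n X = mat n n (\<lambda>(q, q'). \<Sum>p<m. X $$ (p * n + q, p * n + q'))"

definition hom_TP :: "'i set \<Rightarrow> ('i \<Rightarrow> nat) \<Rightarrow> 'j set \<Rightarrow> ('j \<Rightarrow> nat) \<Rightarrow>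
    ('j \<times> 'i \<Rightarrow> complex mat) \<Rightarrow> bool" where
  "hom_TP I dA J dB X \<longleftrightarrow> (\<forall>i\<in>I.
     mat (dA i) (dA i) (\<lambda>(q, q'). \<Sum>j\<in>J. ptrace1 (dB j) (dA i) (X (j, i)) $$ (q, q'))
       = 1\<^sub>m (dA i))"

definition kron_id :: "nat \<Rightarrow> nat \<Rightarrow> complex mat \<Rightarrow> complex mat" where
  "kron_id m n M = mat (m * n) (m * n)
     (\<lambda>(r, s). if r div n = s div n then M $$ (r mod n, s mod n) else 0)"

text \<open>\<open>1_B \<boxtimes> \<rho> = (1_{K_j} \<otimes> \<rho>_i)_{(j,i)} \<in> Hom(A,B)\<close>.\<close>
definition box_one :: "'i set \<Rightarrow> ('i \<Rightarrow> nat) \<Rightarrow> 'j set \<Rightarrow> ('j \<Rightarrow> nat) \<Rightarrow>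
    ('i \<Rightarrow> complex mat) \<Rightarrow> ('j \<times> 'i \<Rightarrow> complex mat)" where
  "box_one I dA J dB \<rho> = (\<lambda>(j, i). if j \<in> J \<and> i \<in> I then kron_id (dB j) (dA i) (\<rho> i) else 0\<^sub>m 0 0)"

definition det_supermap ::
  "'a set \<Rightarrow> ('a \<Rightarrow> nat) \<Rightarrow> 'b set \<Rightarrow> ('b \<Rightarrow> nat) \<Rightarrow>
   'c set \<Rightarrow> ('c \<Rightarrow> nat) \<Rightarrow> 'd set \<Rightarrow> ('d \<Rightarrow> nat) \<Rightarrow>
   (('b \<times> 'a \<Rightarrow> complex mat) \<Rightarrow> ('d \<times> 'c \<Rightarrow> complex mat)) \<Rightarrow> bool" where
  "det_supermap I dA J dB K dC L dD S \<longleftrightarrow>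
     mm_CP (J \<times> I) (hom_dim dA dB) (L \<times> K) (hom_dim dC dD) S \<and>
     (\<forall>X. mm_pos (J \<times> I) (hom_dim dA dB) X \<and> hom_TP I dA J dB X \<longrightarrow>
          hom_TP K dC L dD (S X))"

end

theory Submission imports Defs begin

lemma sum_split_mult: "(\<Sum>r<a*b. g r) = (\<Sum>p<a. \<Sum>q<(b::nat). g (p*b+q))"
proof (induction a)
  case 0 show ?case by simp
next
  case (Suc a)
  have "{..<Suc a * b} = {..<a*b} \<union> {a*b..<a*b+b}" by auto
  then have "(\<Sum>r<Suc a*b. g r) = (\<Sum>r<a*b. g r) + (\<Sum>r\<in>{a*b..<a*b+b}. g r)"
    by (simp add: sum.union_disjoint ivl_disj_int)
  also have "(\<Sum>r\<in>{a*b..<a*b+b}. g r) = (\<Sum>q<b. g (a*b+q))"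
    using sum.shift_bounds_nat_ivl[of g 0 "a*b" b] by (simp add: lessThan_atLeast0 add.commute)
  finally show ?case using Suc by simp
qed

lemma idx_lt: "(a::nat) < n \<Longrightarrow> b < d \<Longrightarrow> a*d + b < n*d"
proof -
  assume "a < n" "b < d"
  then have "a*d + b < a*d + d" by simp
  also have "\<dots> = (Suc a)*d" by simp
  also have "\<dots> \<le> n*d" using \<open>a<n\<close> by (intro mult_right_mono) auto
  finally show ?thesis .
qed

lemma idx_div[simp]: "q < (n::nat) \<Longrightarrow> (p*n+q) div n = p"
  by simp
lemma idx_mod[simp]: "q < (n::nat) \<Longrightarrow> (p*n+q) mod n = q"
  by simp

lemma tr_mult: "A \<in> carrier_mat n k \<Longrightarrow> B \<in> carrier_mat k n \<Longrightarrow>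
   mat_tr (A*B) = (\<Sum>r<n. \<Sum>t<k. A$$(r,t) * B$$(t,r))"
  unfolding mat_tr_def
  by (auto simp: scalar_prod_def atLeast0LessThan intro!: sum.cong)

definition ptr :: "'i set \<Rightarrow> ('i \<Rightarrow> nat) \<Rightarrow> 'j set \<Rightarrow> ('j \<Rightarrow> nat) \<Rightarrow> ('j \<times> 'i \<Rightarrow> complex mat) \<Rightarrow> ('i \<Rightarrow> complex mat)" where
 "ptr I dA J dB X = (\<lambda>i. if i \<in> I then mat (dA i) (dA i) (\<lambda>(q,q'). \<Sum>j\<in>J. ptrace1 (dB j) (dA i) (X (j,i)) $$ (q,q')) else 0\<^sub>m 0 0)"

lemma hom_TP_ptr: "hom_TP I dA J dB X \<longleftrightarrow> ptr I dA J dB X = mm_one I dA"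
  unfolding hom_TP_def ptr_def mm_one_def fun_eq_iff by (metis (no_types, lifting))

lemma ptr_entry: "i\<in>I \<Longrightarrow> q < dA i \<Longrightarrow> q' < dA i \<Longrightarrow>
  ptr I dA J dB X i $$ (q,q') = (\<Sum>j\<in>J. \<Sum>p<dB j. X (j,i) $$ (p*dA i + q, p*dA i + q'))"
  by (simp add: ptr_def ptrace1_def)

lemma ptr_carrier: "ptr I dA J dB X \<in> mm_carrier I dA"
  by (simp add: ptr_def mm_carrier_def)

lemma box_one_carrier: "box_one I dA J dB \<rho> \<in> mm_carrier (J\<times>I) (hom_dim dA dB)"
  by (auto simp: box_one_def mm_carrier_def hom_dim_def kron_id_def)

lemma box_one_app: "j\<in>J \<Longrightarrow> i\<in>I \<Longrightarrow> box_one I dA J dB \<rho> (j,i) = kron_id (dB j) (dA i) (\<rho> i)"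
  by (simp add: box_one_def)

lemma kron_entry: "r < m*n \<Longrightarrow> s < m*n \<Longrightarrow> kron_id m n M $$ (r,s) =
   (if r div n = s div n then M $$ (r mod n, s mod n) else 0)"
  by (simp add: kron_id_def)

lemma sum_delta_nat: "(p::nat) < m \<Longrightarrow> (\<Sum>p'<m. \<Sum>q'<n. if p = p' then f p' q' else 0) = (\<Sum>q'<(n::nat). f p q')"
proof -
  assume "p < m"
  have "(\<Sum>p'<m. \<Sum>q'<n. if p = p' then f p' q' else 0) = (\<Sum>p'<m. if p = p' then (\<Sum>q'<n. f p' q') else 0)"
    by (intro sum.cong refl) simp
  also have "\<dots> = (\<Sum>q'<n. f p q')" using \<open>p<m\<close> by (simp add: sum.delta)
  finally show ?thesis .
qed

lemma tr_kron: assumes M: "M \<in> carrier_mat n n" and X: "X \<in> carrier_mat (m*n) (m*n)"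
  shows "mat_tr (kron_id m n M * X) = (\<Sum>q<n. \<Sum>q'<n. M$$(q,q') * (\<Sum>p<m. X$$(p*n+q', p*n+q)))"
proof -
  have K: "kron_id m n M \<in> carrier_mat (m*n) (m*n)" by (simp add: kron_id_def)
  have "mat_tr (kron_id m n M * X) = (\<Sum>r<m*n. \<Sum>t<m*n. kron_id m n M $$ (r,t) * X$$(t,r))"
    by (rule tr_mult[OF K X])
  also have "\<dots> = (\<Sum>p<m. \<Sum>q<n. \<Sum>p'<m. \<Sum>q'<n. kron_id m n M $$ (p*n+q,p'*n+q') * X$$(p'*n+q',p*n+q))"
    by (simp add: sum_split_mult)
  also have "\<dots> = (\<Sum>p<m. \<Sum>q<n. \<Sum>p'<m. \<Sum>q'<n. (if p = p' then M$$(q,q') * X$$(p'*n+q',p*n+q) else 0))"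
    by (intro sum.cong refl) (simp add: kron_entry idx_lt)
  also have "\<dots> = (\<Sum>p<m. \<Sum>q<n. \<Sum>q'<n. M$$(q,q') * X$$(p*n+q',p*n+q))"
    by (rule sum.cong[OF refl], rule sum.cong[OF refl], simp add: sum_delta_nat)
  also have "\<dots> = (\<Sum>q<n. \<Sum>q'<n. \<Sum>p<m. M$$(q,q') * X$$(p*n+q',p*n+q))"
    by (simp add: sum.swap[of _ "{..<m}"])
  also have "\<dots> = (\<Sum>q<n. \<Sum>q'<n. M$$(q,q') * (\<Sum>p<m. X$$(p*n+q', p*n+q)))"
    by (simp add: sum_distrib_left)
  finally show ?thesis .
qed

lemma trace_box: assumes sig: "\<sigma> \<in> mm_carrier I dA" and X: "X \<in> mm_carrier (J\<times>I) (hom_dim dA dB)"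
  and fin: "finite I" "finite J"
  shows "mm_trace (J\<times>I) (mm_mult (box_one I dA J dB \<sigma>) X) = mm_trace I (mm_mult \<sigma> (ptr I dA J dB X))"
proof -
  have "mm_trace (J\<times>I) (mm_mult (box_one I dA J dB \<sigma>) X) =
     (\<Sum>i\<in>I. \<Sum>j\<in>J. mat_tr (kron_id (dB j) (dA i) (\<sigma> i) * X (j,i)))"
  proof -
    have "mm_trace (J\<times>I) (mm_mult (box_one I dA J dB \<sigma>) X) = (\<Sum>(j,i)\<in>J\<times>I. mat_tr (kron_id (dB j) (dA i) (\<sigma> i) * X (j,i)))"
      unfolding mm_trace_def mm_mult_def by (rule sum.cong) (auto simp: box_one_app)
    also have "\<dots> = (\<Sum>j\<in>J. \<Sum>i\<in>I. mat_tr (kron_id (dB j) (dA i) (\<sigma> i) * X (j,i)))"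
      by (simp add: sum.cartesian_product)
    finally show ?thesis by (simp add: sum.swap[of _ J])
  qed
  also have "\<dots> = (\<Sum>i\<in>I. \<Sum>j\<in>J. \<Sum>q<dA i. \<Sum>q'<dA i. \<sigma> i$$(q,q') * (\<Sum>p<dB j. X (j,i)$$(p*dA i+q', p*dA i+q)))"
    using sig X by (intro sum.cong refl tr_kron) (auto simp: mm_carrier_def hom_dim_def)
  also have "\<dots> = (\<Sum>i\<in>I. mat_tr (\<sigma> i * ptr I dA J dB X i))"
  proof (intro sum.cong refl)
    fix i assume i: "i \<in> I"
    have "mat_tr (\<sigma> i * ptr I dA J dB X i) = (\<Sum>q<dA i. \<Sum>q'<dA i. \<sigma> i$$(q,q') * ptr I dA J dB X i $$ (q',q))"
      using sig i by (intro tr_mult) (auto simp: mm_carrier_def ptr_def)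
    also have "\<dots> = (\<Sum>q<dA i. \<Sum>q'<dA i. \<sigma> i$$(q,q') * (\<Sum>j\<in>J. \<Sum>p<dB j. X (j,i) $$ (p*dA i + q', p*dA i + q)))"
      using i by (simp add: ptr_entry)
    also have "\<dots> = (\<Sum>j\<in>J. \<Sum>q<dA i. \<Sum>q'<dA i. \<sigma> i$$(q,q') * (\<Sum>p<dB j. X (j,i)$$(p*dA i+q', p*dA i+q)))"
      by (simp add: sum_distrib_left sum.swap[of _ J])
    finally show "(\<Sum>j\<in>J. \<Sum>q<dA i. \<Sum>q'<dA i. \<sigma> i$$(q,q') * (\<Sum>p<dB j. X (j,i)$$(p*dA i+q', p*dA i+q)))
       = mat_tr (\<sigma> i * ptr I dA J dB X i)" by simp
  qed
  also have "\<dots> = mm_trace I (mm_mult \<sigma> (ptr I dA J dB X))"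
    by (simp add: mm_trace_def mm_mult_def)
  finally show ?thesis .
qed

lemma tr_zero_right: "V \<in> carrier_mat n n \<Longrightarrow> mat_tr (V * 0\<^sub>m n n) = 0"
  by (subst tr_mult[of _ n n]) auto

lemma trace_nondeg:
  assumes W: "W \<in> mm_carrier I d" and W': "W' \<in> mm_carrier I d" and fin: "finite I"
    and eq: "\<forall>X\<in>mm_carrier I d. mm_trace I (mm_mult W X) = mm_trace I (mm_mult W' X)"
  shows "W = W'"
proof (rule ext)
  fix i
  show "W i = W' i"
  proof (cases "i\<in>I")
    case False then show ?thesis using W W' by (simp add: mm_carrier_def)
  next
    case True
    have Wi: "W i \<in> carrier_mat (d i) (d i)" "W' i \<in> carrier_mat (d i) (d i)"
      using W W' True by (auto simp: mm_carrier_def)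
    show ?thesis
    proof (rule eq_matI)
      fix r s assume rs: "r < dim_row (W' i)" "s < dim_col (W' i)"
      hence r: "r < d i" "s < d i" using Wi by auto
      define X where "X = (\<lambda>i'. if i' \<in> I then (if i' = i then mat (d i) (d i) (\<lambda>(a,b). if a = s \<and> b = r then (1::complex) else 0) else 0\<^sub>m (d i') (d i')) else 0\<^sub>m 0 0)"
      have X: "X \<in> mm_carrier I d" by (simp add: X_def mm_carrier_def)
      have key: "mm_trace I (mm_mult V X) = V i $$ (r,s)" if V: "V \<in> mm_carrier I d" for V
      proof -
        have "mm_trace I (mm_mult V X) = (\<Sum>i'\<in>I. if i' = i then mat_tr (V i * X i) else 0)"
          unfolding mm_trace_def mm_mult_def
        proof (rule sum.cong[OF refl])
          fix i' assume "i' \<in> I"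
          then show "mat_tr (V i' * X i') = (if i' = i then mat_tr (V i * X i) else 0)"
            using V by (auto simp: X_def mm_carrier_def tr_zero_right)
        qed
        also have "\<dots> = mat_tr (V i * X i)" using True fin by (simp add: sum.delta')
        also have "\<dots> = (\<Sum>a<d i. \<Sum>b<d i. V i $$ (a,b) * X i $$ (b,a))"
          using V True X by (intro tr_mult) (auto simp: mm_carrier_def)
        also have "\<dots> = (\<Sum>a<d i. \<Sum>b<d i. if a = r then (if b = s then V i $$ (a,b) else 0) else 0)"
          using True by (intro sum.cong refl) (auto simp: X_def)
        also have "\<dots> = (\<Sum>a<d i. if a = r then V i $$ (a,s) else 0)"
          using r by (intro sum.cong refl) (simp add: sum.delta)
        also have "\<dots> = V i $$ (r,s)" using r by simp
        finally show ?thesis .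
      qed
      show "W i $$ (r,s) = W' i $$ (r,s)" using key[OF W] key[OF W'] eq X by metis
    qed (use Wi in auto)
  qed
qed

definition qf :: "nat \<Rightarrow> complex mat \<Rightarrow> (nat \<Rightarrow> complex) \<Rightarrow> complex" where
  "qf n M v = (\<Sum>r<n. \<Sum>s<n. cnj (v r) * M $$ (r, s) * v s)"

lemma psd_qf: "psd_mat n M \<longleftrightarrow> M \<in> carrier_mat n n \<and> (\<forall>v. Im (qf n M v) = 0 \<and> Re (qf n M v) \<ge> 0)"
  by (simp add: psd_mat_def qf_def)

lemma pullback_form:
  assumes inj: "inj_on \<phi> D" and im: "\<phi> ` D \<subseteq> {..<N}"
  shows "(\<Sum>r\<in>D. \<Sum>s\<in>D. cnj (v r) * Y$$(\<phi> r, \<phi> s) * v s)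
     = qf N Y (\<lambda>x. if x \<in> \<phi>`D then v (inv_into D \<phi> x) else 0)"
proof -
  define w where "w = (\<lambda>x. if x \<in> \<phi>`D then v (inv_into D \<phi> x) else 0)"
  have inner: "(\<Sum>y<N. cnj (w x) * Y$$(x,y) * w y) = (\<Sum>y\<in>\<phi>`D. cnj (w x) * Y$$(x,y) * w y)" for x
    by (rule sum.mono_neutral_right) (use im in \<open>auto simp: w_def\<close>)
  have "qf N Y w = (\<Sum>x<N. \<Sum>y\<in>\<phi>`D. cnj (w x) * Y$$(x,y) * w y)"
    unfolding qf_def inner ..
  also have "\<dots> = (\<Sum>x\<in>\<phi>`D. \<Sum>y\<in>\<phi>`D. cnj (w x) * Y$$(x,y) * w y)"
    by (rule sum.mono_neutral_right) (use im in \<open>auto simp: w_def\<close>)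
  also have "\<dots> = (\<Sum>r\<in>D. \<Sum>s\<in>D. cnj (v r) * Y$$(\<phi> r, \<phi> s) * v s)"
    by (simp add: sum.reindex[OF inj] inv_into_f_f[OF inj] w_def)
  finally show ?thesis by (simp add: w_def)
qed

lemma psd_comb:
  assumes fin: "finite P" and Y: "\<forall>p\<in>P. psd_mat (Nd p) (Y p)"
    and inj: "\<forall>p\<in>P. inj_on (\<phi> p) (D p \<inter> {..<n}) \<and> \<phi> p ` (D p \<inter> {..<n}) \<subseteq> {..<Nd p}"
    and c: "0 \<le> c" and M: "M \<in> carrier_mat n n"
    and ent: "\<forall>r<n. \<forall>s<n. M$$(r,s) = of_real c * (\<Sum>p\<in>P. if r \<in> D p \<and> s \<in> D p then Y p $$ (\<phi> p r, \<phi> p s) else 0)"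
  shows "psd_mat n M"
  unfolding psd_qf
proof (intro conjI allI M)
  fix v
  define g where "g p r s = cnj (v r) * Y p $$ (\<phi> p r, \<phi> p s) * v s" for p r s
  define w where "w p = (\<lambda>x. if x \<in> \<phi> p`(D p \<inter> {..<n}) then v (inv_into (D p \<inter> {..<n}) (\<phi> p) x) else 0)" for p
  have "qf n M v = (\<Sum>r<n. \<Sum>s<n. of_real c * (\<Sum>p\<in>P. if r \<in> D p \<and> s \<in> D p then g p r s else 0))"
    unfolding qf_def
  proof (intro sum.cong refl)
    fix r s assume "r \<in> {..<n}" "s \<in> {..<n}"
    then show "cnj (v r) * M $$ (r, s) * v s = of_real c * (\<Sum>p\<in>P. if r \<in> D p \<and> s \<in> D p then g p r s else 0)"
    proof -
      have "cnj (v r) * M $$ (r, s) * v s = of_real c * (\<Sum>p\<in>P. cnj (v r) * (if r \<in> D p \<and> s \<in> D p then Y p $$ (\<phi> p r, \<phi> p s) else 0) * v s)"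
        using ent \<open>r \<in> {..<n}\<close> \<open>s \<in> {..<n}\<close> by (simp add: sum_distrib_left sum_distrib_right mult_ac)
      also have "\<dots> = of_real c * (\<Sum>p\<in>P. if r \<in> D p \<and> s \<in> D p then g p r s else 0)"
        by (rule arg_cong[where f="\<lambda>x. of_real c * x"], rule sum.cong) (auto simp: g_def)
      finally show ?thesis .
    qed
  qed
  also have "\<dots> = of_real c * (\<Sum>p\<in>P. \<Sum>r<n. \<Sum>s<n. if r \<in> D p \<and> s \<in> D p then g p r s else 0)"
    by (simp add: sum_distrib_left sum.swap[of _ P])
  also have "\<dots> = of_real c * (\<Sum>p\<in>P. qf (Nd p) (Y p) (w p))"
  proof -
    have "(\<Sum>r<n. \<Sum>s<n. if r \<in> D p \<and> s \<in> D p then g p r s else 0) = qf (Nd p) (Y p) (w p)" if p: "p \<in> P" for p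
    proof -
      have "(\<Sum>r<n. \<Sum>s<n. if r \<in> D p \<and> s \<in> D p then g p r s else 0)
          = (\<Sum>r<n. if r \<in> D p then (\<Sum>s<n. if s \<in> D p then g p r s else 0) else 0)"
        by (intro sum.cong refl) auto
      also have "\<dots> = (\<Sum>r\<in>{..<n} \<inter> D p. \<Sum>s\<in>{..<n} \<inter> D p. g p r s)"
        by (simp add: sum.inter_restrict)
      also have "\<dots> = (\<Sum>r\<in>D p \<inter> {..<n}. \<Sum>s\<in>D p \<inter> {..<n}. g p r s)"
        by (simp add: Int_commute)
      also have "\<dots> = qf (Nd p) (Y p) (w p)"
        unfolding g_def w_def using inj p by (intro pullback_form) auto
      finally show ?thesis .
    qed
    then show ?thesis by simp
  qed
  finally have e: "qf n M v = of_real c * (\<Sum>p\<in>P. qf (Nd p) (Y p) (w p))" .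
  have h: "\<forall>p\<in>P. Im (qf (Nd p) (Y p) (w p)) = 0 \<and> Re (qf (Nd p) (Y p) (w p)) \<ge> 0"
    using Y by (simp add: psd_qf)
  have "Im (qf n M v) = c * (\<Sum>p\<in>P. Im (qf (Nd p) (Y p) (w p)))" unfolding e by (simp only: times_complex.sel Re_complex_of_real Im_complex_of_real Re_sum Im_sum mult_zero_left diff_zero add_0 add_0_right)
  also have "\<dots> = 0" using h by simp
  finally show "Im (qf n M v) = 0" .
  have "0 \<le> c * (\<Sum>p\<in>P. Re (qf (Nd p) (Y p) (w p)))"
    using h c by (intro mult_nonneg_nonneg sum_nonneg) auto
  moreover have "Re (qf n M v) = c * (\<Sum>p\<in>P. Re (qf (Nd p) (Y p) (w p)))" unfolding e by (simp only: times_complex.sel Re_complex_of_real Im_complex_of_real Re_sum Im_sum mult_zero_left diff_zero add_0 add_0_right)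
  ultimately show "Re (qf n M v) \<ge> 0" by simp
qed

lemma prod_le_sq: "(x::real) \<ge> 0 \<Longrightarrow> y \<ge> 0 \<Longrightarrow> x^2 \<le> V \<Longrightarrow> y^2 \<le> V \<Longrightarrow> x*y \<le> V"
proof -
  assume a: "x^2 \<le> V" "y^2 \<le> V"
  have "0 \<le> (x-y)^2" by simp
  then have "2*(x*y) \<le> x^2 + y^2" by (simp add: power2_diff)
  then show ?thesis using a by linarith
qed

lemma psd_herm_shift:
  assumes M: "M \<in> carrier_mat n n" and a: "0 \<le> a"
    and herm: "\<forall>r<n. \<forall>s<n. H s r = cnj (H r s)"
    and c: "(\<Sum>r<n. \<Sum>s<n. cmod (H r s)) \<le> c"
    and ent: "\<forall>r<n. \<forall>s<n. M$$(r,s) = of_real a * (H r s + (if r = s then of_real c else 0))"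
  shows "psd_mat n M"
  unfolding psd_qf
proof (intro conjI allI M)
  fix v
  define q where "q = (\<Sum>r<n. \<Sum>s<n. cnj (v r) * H r s * v s)"
  define V where "V = (\<Sum>r<n. (cmod (v r))^2)"
  have V0: "V \<ge> 0" unfolding V_def by (simp add: sum_nonneg)
  have "qf n M v = (\<Sum>r<n. \<Sum>s<n. of_real a * (cnj (v r) * H r s * v s) + (if s = r then of_real a * of_real c * (cnj (v r) * v r) else 0))"
    unfolding qf_def using ent by (intro sum.cong refl) (auto simp: algebra_simps)
  also have "\<dots> = (\<Sum>r<n. \<Sum>s<n. of_real a * (cnj (v r) * H r s * v s)) + (\<Sum>r<n. \<Sum>s<n. (if s = r then of_real a * of_real c * (cnj (v r) * v r) else 0))"
    by (simp add: sum.distrib)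
  also have "\<dots> = of_real a * q + of_real a * of_real c * (\<Sum>r<n. cnj (v r) * v r)"
    by (simp add: sum_distrib_left q_def mult.assoc)
  also have "(\<Sum>r<n. cnj (v r) * v r) = of_real V"
    unfolding V_def of_real_sum by (intro sum.cong refl, subst complex_norm_square) (simp add: mult.commute)
  finally have e: "qf n M v = of_real a * q + of_real (a * c * V)" by simp
  have "cnj q = (\<Sum>r<n. \<Sum>s<n. v r * cnj (H r s) * cnj (v s))"
    by (simp add: q_def)
  also have "\<dots> = (\<Sum>r<n. \<Sum>s<n. v r * H s r * cnj (v s))"
  proof (intro sum.cong refl)
    fix r s assume rs: "r \<in> {..<n}" "s \<in> {..<n}"
    then have h: "H s r = cnj (H r s)" using herm by blast
    show "v r * cnj (H r s) * cnj (v s) = v r * H s r * cnj (v s)" by (simp only: h)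
  qed
  also have "\<dots> = q" unfolding q_def by (subst sum.swap) (simp add: mult_ac)
  finally have cq: "cnj q = q" .
  have "Im (cnj q) = Im q" using cq by simp
  then have Imq: "Im q = 0" by simp
  have "cmod q \<le> (\<Sum>r<n. \<Sum>s<n. cmod (cnj (v r) * H r s * v s))"
    unfolding q_def by (rule order_trans[OF norm_sum sum_mono[OF norm_sum]])
  also have "\<dots> \<le> (\<Sum>r<n. \<Sum>s<n. cmod (H r s) * V)"
  proof (intro sum_mono)
    fix r s assume rs: "r \<in> {..<n}" "s \<in> {..<n}"
    have "(cmod (v r))^2 \<le> V" unfolding V_def using rs by (intro member_le_sum) auto
    moreover have "(cmod (v s))^2 \<le> V" unfolding V_def using rs by (intro member_le_sum) auto
    ultimately have "cmod (v r) * cmod (v s) \<le> V" by (intro prod_le_sq) auto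
    have "cmod (cnj (v r) * H r s * v s) = cmod (H r s) * (cmod (v r) * cmod (v s))" by (simp add: norm_mult)
    also have "\<dots> \<le> cmod (H r s) * V" by (rule mult_left_mono) (use \<open>cmod (v r) * cmod (v s) \<le> V\<close> in auto)
    finally show "cmod (cnj (v r) * H r s * v s) \<le> cmod (H r s) * V" .
  qed
  also have "\<dots> = (\<Sum>r<n. \<Sum>s<n. cmod (H r s)) * V" by (simp add: sum_distrib_right)
  also have "\<dots> \<le> c * V" using c V0 by (rule mult_right_mono)
  finally have "cmod q \<le> c * V" .
  then have "- (c*V) \<le> Re q" using abs_Re_le_cmod[of q] by linarith
  then have "0 \<le> Re q + c * V" by linarith
  then have "0 \<le> a * (Re q + c*V)" using a by simp
  then show "Re (qf n M v) \<ge> 0" unfolding e by (simp add: algebra_simps)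
  show "Im (qf n M v) = 0" unfolding e using Imq by simp
qed

lemma mm_eqI:
  assumes "F \<in> mm_carrier I d" "G \<in> mm_carrier I d"
    and "\<And>i r s. i\<in>I \<Longrightarrow> r<d i \<Longrightarrow> s<d i \<Longrightarrow> F i $$ (r,s) = G i $$ (r,s)"
  shows "F = G"
proof (rule ext)
  fix i show "F i = G i"
  proof (cases "i \<in> I")
    case True
    then have "F i \<in> carrier_mat (d i) (d i)" "G i \<in> carrier_mat (d i) (d i)" using assms by (auto simp: mm_carrier_def)
    then show ?thesis using assms(3)[OF True] by (intro eq_matI) auto
  qed (use assms in \<open>auto simp: mm_carrier_def\<close>)
qed

lemma mm_add_carrier: "X \<in> mm_carrier I d \<Longrightarrow> Y \<in> mm_carrier I d \<Longrightarrow> mm_add X Y \<in> mm_carrier I d"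
  by (auto simp: mm_carrier_def mm_add_def)
lemma mm_smult_carrier: "X \<in> mm_carrier I d \<Longrightarrow> mm_smult c X \<in> mm_carrier I d"
  by (auto simp: mm_carrier_def mm_smult_def)
lemma mm_add_entry: "X \<in> mm_carrier I d \<Longrightarrow> Y \<in> mm_carrier I d \<Longrightarrow> i\<in>I \<Longrightarrow> r<d i \<Longrightarrow> s<d i \<Longrightarrow>
   mm_add X Y i $$ (r,s) = X i $$ (r,s) + Y i $$ (r,s)"
  by (auto simp: mm_carrier_def mm_add_def)
lemma mm_smult_entry: "X \<in> mm_carrier I d \<Longrightarrow> i\<in>I \<Longrightarrow> r<d i \<Longrightarrow> s<d i \<Longrightarrow>
   mm_smult c X i $$ (r,s) = c * X i $$ (r,s)"
  by (auto simp: mm_carrier_def mm_smult_def)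
lemma carrier_dim: "X \<in> mm_carrier I d \<Longrightarrow> i\<in>I \<Longrightarrow> X i \<in> carrier_mat (d i) (d i)"
  by (auto simp: mm_carrier_def)

lemma block_entry: "i\<in>I \<Longrightarrow> r<d i \<Longrightarrow> s<d i \<Longrightarrow> mm_block I d Y a b i $$ (r,s) = Y i $$ (a*d i+r, b*d i+s)"
  by (simp add: mm_block_def)
lemma block_carrier: "mm_block I d Y a b \<in> mm_carrier I d"
  by (simp add: mm_block_def mm_carrier_def)
lemma ampl_entry: "k\<in>K \<Longrightarrow> r < n*e k \<Longrightarrow> s < n*e k \<Longrightarrow>
  mm_ampl I d K e n \<Phi> Y k $$ (r,s) = \<Phi> (mm_block I d Y (r div e k) (s div e k)) k $$ (r mod e k, s mod e k)"
  by (simp add: mm_ampl_def)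
lemma ampl_carrier: "mm_ampl I d K e n \<Phi> Y \<in> mm_carrier K (\<lambda>k. n*e k)"
  by (simp add: mm_ampl_def mm_carrier_def)

lemma block_ampl:
  assumes \<Phi>: "\<forall>X\<in>mm_carrier I d. \<Phi> X \<in> mm_carrier K e" and ab: "a<n" "b<n"
  shows "mm_block K e (mm_ampl I d K e n \<Phi> Y) a b = \<Phi> (mm_block I d Y a b)"
proof (rule mm_eqI[OF block_carrier])
  show C: "\<Phi> (mm_block I d Y a b) \<in> mm_carrier K e" using \<Phi> block_carrier by blast
  fix k r s assume k: "k\<in>K" and rs: "r < e k" "s < e k"
  have "a*e k + r < n*e k" "b*e k+s < n*e k" using ab rs by (auto intro: idx_lt)
  then show "mm_block K e (mm_ampl I d K e n \<Phi> Y) a b k $$ (r, s) = \<Phi> (mm_block I d Y a b) k $$ (r, s)"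
    using k rs by (simp add: block_entry ampl_entry)
qed

lemma ampl_comp:
  assumes \<Phi>: "\<forall>X\<in>mm_carrier I d. \<Phi> X \<in> mm_carrier K e"
  shows "mm_ampl K e M f n \<Psi> (mm_ampl I d K e n \<Phi> Y) = mm_ampl I d M f n (\<lambda>X. \<Psi> (\<Phi> X)) Y"
proof (rule mm_eqI[OF ampl_carrier ampl_carrier])
  fix m r s assume m: "m \<in> M" and rs: "r < n * f m" "s < n*f m"
  then have "r div f m < n" "s div f m < n" by (auto intro: less_mult_imp_div_less)
  then show "mm_ampl K e M f n \<Psi> (mm_ampl I d K e n \<Phi> Y) m $$ (r, s) = mm_ampl I d M f n (\<lambda>X. \<Psi> (\<Phi> X)) Y m $$ (r, s)"
    using m rs by (simp add: ampl_entry block_ampl[OF \<Phi>])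
qed

lemma CP_comp:
  assumes "mm_CP I d K e \<Phi>" "mm_CP K e M f \<Psi>"
  shows "mm_CP I d M f (\<lambda>X. \<Psi> (\<Phi> X))"
proof -
  have L1: "mm_linear I d K e \<Phi>" and L2: "mm_linear K e M f \<Psi>" using assms by (auto simp: mm_CP_def)
  have C1: "\<forall>X\<in>mm_carrier I d. \<Phi> X \<in> mm_carrier K e" using L1 by (simp add: mm_linear_def)
  have "mm_linear I d M f (\<lambda>X. \<Psi> (\<Phi> X))"
    using L1 L2 unfolding mm_linear_def by auto
  moreover have "mm_pos M (\<lambda>k. n * f k) (mm_ampl I d M f n (\<lambda>X. \<Psi> (\<Phi> X)) Y)"
    if "n>0" "mm_pos I (\<lambda>i. n * d i) Y" for n Y
  proof -
    have "mm_pos K (\<lambda>k. n * e k) (mm_ampl I d K e n \<Phi> Y)" using assms(1) that by (simp add: mm_CP_def)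
    then have "mm_pos M (\<lambda>k. n * f k) (mm_ampl K e M f n \<Psi> (mm_ampl I d K e n \<Phi> Y))"
      using assms(2) that by (simp add: mm_CP_def)
    then show ?thesis by (simp add: ampl_comp[OF C1])
  qed
  ultimately show ?thesis by (simp add: mm_CP_def)
qed

definition emb :: "'i set \<Rightarrow> ('i \<Rightarrow> nat) \<Rightarrow> 'j set \<Rightarrow> ('j \<Rightarrow> nat) \<Rightarrow> ('i \<Rightarrow> complex mat) \<Rightarrow> ('j \<times> 'i \<Rightarrow> complex mat)" where
  "emb I dA J dB a = mm_smult (of_real (1 / real (\<Sum>j\<in>J. dB j))) (box_one I dA J dB a)"

lemma emb_carrier: "emb I dA J dB a \<in> mm_carrier (J\<times>I) (hom_dim dA dB)"
  by (simp add: emb_def mm_smult_carrier box_one_carrier)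

lemma kron_dims[simp]: "dim_row (kron_id m n M) = m*n" "dim_col (kron_id m n M) = m*n"
  by (simp_all add: kron_id_def)

lemma emb_entry: "j\<in>J \<Longrightarrow> i\<in>I \<Longrightarrow> r < dB j * dA i \<Longrightarrow> s < dB j * dA i \<Longrightarrow>
  emb I dA J dB a (j,i) $$ (r,s) = of_real (1 / real (\<Sum>j\<in>J. dB j)) *
     (if r div dA i = s div dA i then a i $$ (r mod dA i, s mod dA i) else 0)"
  by (simp add: emb_def mm_smult_def box_one_app kron_entry)

lemma pos_of_lt: "r < m * (n::nat) \<Longrightarrow> 0 < n" by (cases n) auto

lemma emb_linear: "mm_linear I dA (J\<times>I) (hom_dim dA dB) (emb I dA J dB)"
  unfolding mm_linear_def
proof (intro conjI ballI allI)
  fix X assume "X \<in> mm_carrier I dA" then show "emb I dA J dB X \<in> mm_carrier (J \<times> I) (hom_dim dA dB)"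
    by (simp add: emb_carrier)
next
  fix X Y assume X: "X \<in> mm_carrier I dA" and Y: "Y \<in> mm_carrier I dA"
  show "emb I dA J dB (mm_add X Y) = mm_add (emb I dA J dB X) (emb I dA J dB Y)"
  proof (rule mm_eqI[OF emb_carrier mm_add_carrier[OF emb_carrier emb_carrier]])
    fix b r s assume b: "b \<in> J\<times>I" and rs: "r < hom_dim dA dB b" "s < hom_dim dA dB b"
    obtain j i where ji: "b = (j,i)" "j\<in>J" "i\<in>I" using b by auto
    have rs': "r < dB j * dA i" "s < dB j * dA i" using rs ji by (auto simp: hom_dim_def)
    then have "0 < dA i" by (simp add: pos_of_lt)
    then show "emb I dA J dB (mm_add X Y) b $$ (r, s) = mm_add (emb I dA J dB X) (emb I dA J dB Y) b $$ (r, s)"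
      using ji rs rs' X Y
      by (simp add: mm_add_entry[OF emb_carrier emb_carrier] emb_entry mm_add_entry algebra_simps add_divide_distrib)
  qed
next
  fix c X assume X: "X \<in> mm_carrier I dA"
  show "emb I dA J dB (mm_smult c X) = mm_smult c (emb I dA J dB X)"
  proof (rule mm_eqI[OF emb_carrier mm_smult_carrier[OF emb_carrier]])
    fix b r s assume b: "b \<in> J\<times>I" and rs: "r < hom_dim dA dB b" "s < hom_dim dA dB b"
    obtain j i where ji: "b = (j,i)" "j\<in>J" "i\<in>I" using b by auto
    have rs': "r < dB j * dA i" "s < dB j * dA i" using rs ji by (auto simp: hom_dim_def)
    then have "0 < dA i" by (simp add: pos_of_lt)
    then show "emb I dA J dB (mm_smult c X) b $$ (r, s) = mm_smult c (emb I dA J dB X) b $$ (r, s)"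
      using ji rs rs' X
      by (simp add: mm_smult_entry[OF emb_carrier] emb_entry mm_smult_entry algebra_simps)
  qed
qed

lemma ptr_linear: "mm_linear (J\<times>I) (hom_dim dA dB) I dA (ptr I dA J dB)"
  unfolding mm_linear_def
proof (intro conjI ballI allI)
  fix X show "ptr I dA J dB X \<in> mm_carrier I dA" by (rule ptr_carrier)
next
  fix X Y assume X: "X \<in> mm_carrier (J\<times>I) (hom_dim dA dB)" and Y: "Y \<in> mm_carrier (J\<times>I) (hom_dim dA dB)"
  show "ptr I dA J dB (mm_add X Y) = mm_add (ptr I dA J dB X) (ptr I dA J dB Y)"
  proof (rule mm_eqI[OF ptr_carrier mm_add_carrier[OF ptr_carrier ptr_carrier]])
    fix i q q' assume i: "i\<in>I" and q: "q < dA i" "q' < dA i"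
    have "(\<Sum>j\<in>J. \<Sum>p<dB j. mm_add X Y (j,i) $$ (p*dA i + q, p*dA i + q'))
        = (\<Sum>j\<in>J. \<Sum>p<dB j. X (j,i) $$ (p*dA i + q, p*dA i + q') + Y (j,i) $$ (p*dA i + q, p*dA i + q'))"
    proof (intro sum.cong refl)
      fix j p assume "j \<in> J" "p \<in> {..<dB j}"
      then show "mm_add X Y (j,i) $$ (p*dA i + q, p*dA i + q') = X (j,i) $$ (p*dA i + q, p*dA i + q') + Y (j,i) $$ (p*dA i + q, p*dA i + q')"
        using i q X Y by (intro mm_add_entry) (auto simp: hom_dim_def intro: idx_lt)
    qed
    then show "ptr I dA J dB (mm_add X Y) i $$ (q, q') = mm_add (ptr I dA J dB X) (ptr I dA J dB Y) i $$ (q, q')"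
      using i q by (simp add: ptr_entry mm_add_entry[OF ptr_carrier ptr_carrier] sum.distrib)
  qed
next
  fix c X assume X: "X \<in> mm_carrier (J\<times>I) (hom_dim dA dB)"
  show "ptr I dA J dB (mm_smult c X) = mm_smult c (ptr I dA J dB X)"
  proof (rule mm_eqI[OF ptr_carrier mm_smult_carrier[OF ptr_carrier]])
    fix i q q' assume i: "i\<in>I" and q: "q < dA i" "q' < dA i"
    have "(\<Sum>j\<in>J. \<Sum>p<dB j. mm_smult c X (j,i) $$ (p*dA i + q, p*dA i + q'))
        = (\<Sum>j\<in>J. \<Sum>p<dB j. c * X (j,i) $$ (p*dA i + q, p*dA i + q'))"
    proof (intro sum.cong refl)
      fix j p assume "j \<in> J" "p \<in> {..<dB j}"
      then show "mm_smult c X (j,i) $$ (p*dA i + q, p*dA i + q') = c * X (j,i) $$ (p*dA i + q, p*dA i + q')"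
        using i q X by (intro mm_smult_entry) (auto simp: hom_dim_def intro: idx_lt)
    qed
    then show "ptr I dA J dB (mm_smult c X) i $$ (q, q') = mm_smult c (ptr I dA J dB X) i $$ (q, q')"
      using i q by (simp add: ptr_entry mm_smult_entry[OF ptr_carrier] sum_distrib_left)
  qed
qed

lemma sum_two_eq: "(x::nat) < N \<Longrightarrow> (\<Sum>p<N. if x = p \<and> y = p then f else 0) = (if x = y then f else 0)"
proof (cases "x = y")
  case True
  assume "x < N"
  have "(\<Sum>p<N. if x = p \<and> y = p then f else 0) = (\<Sum>p<N. if x = p then f else 0)"
    using True by (intro sum.cong refl) auto
  then show ?thesis using True \<open>x<N\<close> by simp
next
  case False
  then show ?thesis by (intro trans[OF sum.neutral]) auto
qed

lemma inj_helper: assumes "0<(d::nat)" "d dvd h" "(r1 mod h) div d = (r2 mod h) div d"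
   "(r1 div h)*d + r1 mod d = (r2 div h)*d + r2 mod d" shows "r1 = r2"
proof -
  have a: "r1 div h = r2 div h" using arg_cong[OF assms(4), of "\<lambda>x. x div d"] assms(1) by simp
  have b: "r1 mod d = r2 mod d" using arg_cong[OF assms(4), of "\<lambda>x. x mod d"] assms(1) by simp
  have "r1 mod h = ((r1 mod h) div d)*d + (r1 mod h) mod d" by simp
  also have "(r1 mod h) mod d = r1 mod d" using assms(2) by (simp add: mod_mod_cancel)
  finally have c1: "r1 mod h = ((r1 mod h) div d)*d + r1 mod d" .
  have "r2 mod h = ((r2 mod h) div d)*d + (r2 mod h) mod d" by simp
  also have "(r2 mod h) mod d = r2 mod d" using assms(2) by (simp add: mod_mod_cancel)
  finally have c2: "r2 mod h = ((r2 mod h) div d)*d + r2 mod d" .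
  have "r1 mod h = r2 mod h" using c1 c2 assms(3) b by simp
  then show ?thesis using a by (metis div_mult_mod_eq)
qed

lemma emb_CP: assumes vA: "mm_valid I dA"
  shows "mm_CP I dA (J\<times>I) (hom_dim dA dB) (emb I dA J dB)"
  unfolding mm_CP_def
proof (intro conjI emb_linear allI impI)
  fix n Y assume n: "0<n" and Y: "mm_pos I (\<lambda>i. n*dA i) Y"
  show "mm_pos (J\<times>I) (\<lambda>b. n * hom_dim dA dB b) (mm_ampl I dA (J\<times>I) (hom_dim dA dB) n (emb I dA J dB) Y)"
    unfolding mm_pos_def
  proof (intro conjI ampl_carrier ballI)
    fix b assume b: "b\<in>J\<times>I"
    obtain j i where ji: "b=(j,i)" "j\<in>J" "i\<in>I" using b by auto
    define h where "h = dB j * dA i"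
    define d where "d = dA i"
    have hb: "hom_dim dA dB b = h" using ji by (simp add: hom_dim_def h_def)
    have d0: "0 < d" using vA ji by (simp add: mm_valid_def d_def)
    have hd: "d dvd h" by (simp add: h_def d_def)
    have Yi: "psd_mat (n*d) (Y i)" using Y ji by (simp add: mm_pos_def d_def)
    define g where "g r = (r mod h) div d" for r
    define \<phi> where "\<phi> r = (r div h) * d + r mod d" for r
    let ?m = "real (\<Sum>j\<in>J. dB j)"
    let ?A = "mm_ampl I dA (J\<times>I) (hom_dim dA dB) n (emb I dA J dB) Y"
    show "psd_mat (n * hom_dim dA dB b) (?A b)"
      unfolding hb
    proof (rule psd_comb[where P="{..<dB j}" and Nd="\<lambda>_. n*d" and Y="\<lambda>_. Y i" and D="\<lambda>p. {r. g r = p}"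
          and \<phi>="\<lambda>_. \<phi>" and c="1 / ?m"])
      show "finite {..<dB j}" by simp
      show "\<forall>p\<in>{..<dB j}. psd_mat (n * d) (Y i)" using Yi by simp
      show "0 \<le> 1 / ?m" by (simp add: sum_nonneg)
      show "?A b \<in> carrier_mat (n * h) (n * h)" using ampl_carrier[of I dA "J\<times>I" "hom_dim dA dB" n "emb I dA J dB" Y] b hb
        by (auto simp: mm_carrier_def)
      show "\<forall>p\<in>{..<dB j}. inj_on \<phi> ({r. g r = p} \<inter> {..<n * h}) \<and> \<phi> ` ({r. g r = p} \<inter> {..<n * h}) \<subseteq> {..<n * d}"
      proof (intro ballI conjI)
        fix p show "inj_on \<phi> ({r. g r = p} \<inter> {..<n * h})"
          unfolding inj_on_def \<phi>_def g_def using d0 hd inj_helper by blast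
        show "\<phi> ` ({r. g r = p} \<inter> {..<n * h}) \<subseteq> {..<n * d}"
        proof
          fix x assume "x \<in> \<phi> ` ({r. g r = p} \<inter> {..<n * h})"
          then obtain r where r: "r < n*h" "x = \<phi> r" by auto
          have "r div h < n" using r by (auto intro: less_mult_imp_div_less simp: mult.commute)
          then show "x \<in> {..<n*d}" using r d0 unfolding \<phi>_def by (auto intro: idx_lt)
        qed
      qed
      show "\<forall>r<n * h. \<forall>s<n * h. ?A b $$ (r, s) = complex_of_real (1 / ?m) *
          (\<Sum>p<dB j. if r \<in> {r. g r = p} \<and> s \<in> {r. g r = p} then Y i $$ (\<phi> r, \<phi> s) else 0)"
      proof (intro allI impI)
        fix r s assume rs: "r < n*h" "s < n*h"
        have h0: "0 < h" using rs by (simp add: pos_of_lt)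
        have rh: "r mod h < h" "s mod h < h" using h0 by auto
        have grs: "g r < dB j" using rh unfolding g_def h_def d_def by (auto intro: less_mult_imp_div_less)
        have md: "(r mod h) mod d = r mod d" "(s mod h) mod d = s mod d" using hd by (auto simp: mod_mod_cancel)
        have "?A b $$ (r,s) = emb I dA J dB (mm_block I dA Y (r div h) (s div h)) (j,i) $$ (r mod h, s mod h)"
          using ji rs hb by (simp add: ampl_entry)
        also have "\<dots> = complex_of_real (1 / ?m) * (if g r = g s then Y i $$ (\<phi> r, \<phi> s) else 0)"
          using ji rh d0 md by (simp add: emb_entry h_def d_def[symmetric] g_def \<phi>_def block_entry)
        also have "\<dots> = complex_of_real (1 / ?m) *
          (\<Sum>p<dB j. if r \<in> {r. g r = p} \<and> s \<in> {r. g r = p} then Y i $$ (\<phi> r, \<phi> s) else 0)"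
          using grs by (simp add: sum_two_eq)
        finally show "?A b $$ (r, s) = complex_of_real (1 / ?m) *
          (\<Sum>p<dB j. if r \<in> {r. g r = p} \<and> s \<in> {r. g r = p} then Y i $$ (\<phi> r, \<phi> s) else 0)" .
      qed
    qed
  qed
qed

lemma inj_helper2: assumes "0<(d::nat)" "p*d + r1 mod d < H" "p*d + r2 mod d < H"
   "(r1 div d)*H + (p*d + r1 mod d) = (r2 div d)*H + (p*d + r2 mod d)" shows "r1 = r2"
proof -
  have a: "r1 div d = r2 div d" using arg_cong[OF assms(4), of "\<lambda>x. x div H"] assms(2,3) by simp
  have "p*d + r1 mod d = p*d + r2 mod d" using arg_cong[OF assms(4), of "\<lambda>x. x mod H"] assms(2,3) by simp
  then have "r1 mod d = r2 mod d" by simp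
  then show ?thesis using a by (metis div_mult_mod_eq)
qed

lemma ptr_CP: assumes vC: "mm_valid K dC" and vD: "mm_valid L dD"
  shows "mm_CP (L\<times>K) (hom_dim dC dD) K dC (ptr K dC L dD)"
  unfolding mm_CP_def
proof (intro conjI ptr_linear allI impI)
  fix n Z assume n: "0<n" and Z: "mm_pos (L\<times>K) (\<lambda>b. n*hom_dim dC dD b) Z"
  show "mm_pos K (\<lambda>k. n * dC k) (mm_ampl (L\<times>K) (hom_dim dC dD) K dC n (ptr K dC L dD) Z)"
    unfolding mm_pos_def
  proof (intro conjI ampl_carrier ballI)
    fix k assume k: "k\<in>K"
    define d where "d = dC k"
    have d0: "0 < d" using vC k by (simp add: mm_valid_def d_def)
    have finL: "finite L" using vD by (simp add: mm_valid_def)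
    define P where "P = Sigma L (\<lambda>l. {..<dD l})"
    define \<phi> where "\<phi> lp r = (r div d)*(dD (fst lp) * d) + (snd lp * d + r mod d)" for lp r
    let ?A = "mm_ampl (L\<times>K) (hom_dim dC dD) K dC n (ptr K dC L dD) Z"
    show "psd_mat (n * dC k) (?A k)"
      unfolding d_def[symmetric]
    proof (rule psd_comb[where P=P and Nd="\<lambda>lp. n*(dD (fst lp) * d)" and Y="\<lambda>lp. Z (fst lp, k)" and D="\<lambda>_. UNIV"
          and \<phi>=\<phi> and c=1])
      show "finite P" using finL by (simp add: P_def)
      show "\<forall>lp\<in>P. psd_mat (n * (dD (fst lp) * d)) (Z (fst lp, k))"
        using Z k by (auto simp: mm_pos_def P_def hom_dim_def d_def)
      show "(0::real) \<le> 1" by simp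
      show "?A k \<in> carrier_mat (n * d) (n * d)" using ampl_carrier[of "L\<times>K" "hom_dim dC dD" K dC n "ptr K dC L dD" Z] k
        by (auto simp: mm_carrier_def d_def)
      show "\<forall>lp\<in>P. inj_on (\<phi> lp) (UNIV \<inter> {..<n * d}) \<and> \<phi> lp ` (UNIV \<inter> {..<n * d}) \<subseteq> {..<n * (dD (fst lp) * d)}"
      proof (intro ballI conjI)
        fix lp assume lp: "lp \<in> P"
        have pl: "snd lp * d + r mod d < dD (fst lp) * d" for r
          using lp d0 unfolding P_def by (auto intro!: idx_lt)
        show "inj_on (\<phi> lp) (UNIV \<inter> {..<n * d})"
          unfolding inj_on_def \<phi>_def using d0 pl inj_helper2 by blast
        show "\<phi> lp ` (UNIV \<inter> {..<n * d}) \<subseteq> {..<n * (dD (fst lp) * d)}"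
        proof
          fix x assume "x \<in> \<phi> lp ` (UNIV \<inter> {..<n * d})"
          then obtain r where r: "r < n*d" "x = \<phi> lp r" by auto
          have "r div d < n" using r by (auto intro: less_mult_imp_div_less)
          then show "x \<in> {..<n * (dD (fst lp) * d)}" using r pl unfolding \<phi>_def by (auto intro: idx_lt)
        qed
      qed
      show "\<forall>r<n * d. \<forall>s<n * d. ?A k $$ (r, s) = complex_of_real 1 *
          (\<Sum>lp\<in>P. if r \<in> UNIV \<and> s \<in> UNIV then Z (fst lp, k) $$ (\<phi> lp r, \<phi> lp s) else 0)"
      proof (intro allI impI)
        fix r s assume rs: "r < n*d" "s < n*d"
        have rd: "r mod d < d" "s mod d < d" using d0 by auto
        have "?A k $$ (r,s) = ptr K dC L dD (mm_block (L\<times>K) (hom_dim dC dD) Z (r div d) (s div d)) k $$ (r mod d, s mod d)"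
          using k rs by (simp add: ampl_entry d_def)
        also have "\<dots> = (\<Sum>l\<in>L. \<Sum>p<dD l. mm_block (L\<times>K) (hom_dim dC dD) Z (r div d) (s div d) (l,k) $$ (p*d + r mod d, p*d + s mod d))"
          using k rd by (simp add: ptr_entry d_def)
        also have "\<dots> = (\<Sum>l\<in>L. \<Sum>p<dD l. Z (l,k) $$ (\<phi> (l,p) r, \<phi> (l,p) s))"
        proof (intro sum.cong refl)
          fix l p assume l: "l \<in> L" "p \<in> {..<dD l}"
          have "p*d + r mod d < dD l * d" "p*d + s mod d < dD l * d" using l rd by (auto intro: idx_lt)
          then show "mm_block (L\<times>K) (hom_dim dC dD) Z (r div d) (s div d) (l,k) $$ (p*d + r mod d, p*d + s mod d)
              = Z (l,k) $$ (\<phi> (l,p) r, \<phi> (l,p) s)"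
            using l k by (simp add: block_entry hom_dim_def d_def \<phi>_def)
        qed
        also have "\<dots> = (\<Sum>lp\<in>P. Z (fst lp, k) $$ (\<phi> lp r, \<phi> lp s))"
          unfolding P_def using finL by (subst sum.Sigma) (auto simp: split_def)
        finally show "?A k $$ (r, s) = complex_of_real 1 *
          (\<Sum>lp\<in>P. if r \<in> UNIV \<and> s \<in> UNIV then Z (fst lp, k) $$ (\<phi> lp r, \<phi> lp s) else 0)" by simp
      qed
    qed
  qed
qed

lemma trace_mult_add: assumes B: "B \<in> mm_carrier I d" and U: "U \<in> mm_carrier I d" and V: "V \<in> mm_carrier I d"
  shows "mm_trace I (mm_mult B (mm_add U V)) = mm_trace I (mm_mult B U) + mm_trace I (mm_mult B V)"
  unfolding mm_trace_def mm_mult_def sum.distrib[symmetric]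
proof (rule sum.cong[OF refl])
  fix i assume i: "i \<in> I"
  have c: "B i \<in> carrier_mat (d i) (d i)" "U i \<in> carrier_mat (d i) (d i)" "V i \<in> carrier_mat (d i) (d i)"
    using B U V i by (auto simp: mm_carrier_def)
  have "mat_tr (B i * mm_add U V i) = (\<Sum>r<d i. \<Sum>t<d i. B i $$ (r,t) * mm_add U V i $$ (t,r))"
    using c by (intro tr_mult) (auto simp: mm_add_def)
  also have "\<dots> = (\<Sum>r<d i. \<Sum>t<d i. B i $$ (r,t) * U i $$ (t,r)) + (\<Sum>r<d i. \<Sum>t<d i. B i $$ (r,t) * V i $$ (t,r))"
    using c by (simp add: mm_add_def sum.distrib distrib_left)
  also have "\<dots> = mat_tr (B i * U i) + mat_tr (B i * V i)"
    using c by (simp add: tr_mult)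
  finally show "mat_tr (B i * mm_add U V i) = mat_tr (B i * U i) + mat_tr (B i * V i)" .
qed

lemma trace_mult_smult: assumes B: "B \<in> mm_carrier I d" and U: "U \<in> mm_carrier I d"
  shows "mm_trace I (mm_mult B (mm_smult c U)) = c * mm_trace I (mm_mult B U)"
  unfolding mm_trace_def mm_mult_def sum_distrib_left
proof (rule sum.cong[OF refl])
  fix i assume i: "i \<in> I"
  have cc: "B i \<in> carrier_mat (d i) (d i)" "U i \<in> carrier_mat (d i) (d i)"
    using B U i by (auto simp: mm_carrier_def)
  have "mat_tr (B i * mm_smult c U i) = (\<Sum>r<d i. \<Sum>t<d i. B i $$ (r,t) * mm_smult c U i $$ (t,r))"
    using cc by (intro tr_mult) (auto simp: mm_smult_def)
  also have "\<dots> = c * (\<Sum>r<d i. \<Sum>t<d i. B i $$ (r,t) * U i $$ (t,r))"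
    using cc by (simp add: mm_smult_def sum_distrib_left mult_ac)
  also have "\<dots> = c * mat_tr (B i * U i)"
    using cc by (simp add: tr_mult)
  finally show "mat_tr (B i * mm_smult c U i) = c * mat_tr (B i * U i)" .
qed

lemma trace_one: "\<rho> \<in> mm_carrier K d \<Longrightarrow> mm_trace K (mm_mult \<rho> (mm_one K d)) = mm_trace K \<rho>"
  unfolding mm_trace_def mm_mult_def mm_one_def
  by (intro sum.cong refl) (auto simp: mm_carrier_def)

lemma mm_one_carrier: "mm_one I d \<in> mm_carrier I d"
  by (simp add: mm_one_def mm_carrier_def)

lemma msum_pos: "mm_valid J dB \<Longrightarrow> 0 < (\<Sum>j\<in>J. dB j)"
  unfolding mm_valid_def by (metis all_not_in_conv sum_pos)

lemma ptr_emb: assumes a: "a \<in> mm_carrier I dA" and vB: "mm_valid J dB"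
  shows "ptr I dA J dB (emb I dA J dB a) = a"
proof (rule mm_eqI[OF ptr_carrier a])
  fix i q q' assume i: "i\<in>I" and q: "q < dA i" "q' < dA i"
  let ?m = "(\<Sum>j\<in>J. dB j)"
  have "ptr I dA J dB (emb I dA J dB a) i $$ (q,q') = (\<Sum>j\<in>J. \<Sum>p<dB j. complex_of_real (1 / real ?m) * a i $$ (q,q'))"
    using i q by (simp add: ptr_entry emb_entry idx_lt)
  also have "\<dots> = (\<Sum>j\<in>J. of_nat (dB j) * (complex_of_real (1 / real ?m) * a i $$ (q,q')))" by simp
  also have "\<dots> = of_nat ?m * (complex_of_real (1 / real ?m) * a i $$ (q,q'))" by (simp only: of_nat_sum sum_distrib_right)
  also have "\<dots> = (complex_of_real (1 / real ?m) * of_nat ?m) * a i $$ (q,q')" by (simp add: mult_ac)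
  also have "complex_of_real (1 / real ?m) * of_nat ?m = complex_of_real (1 / real ?m * real ?m)" by (simp only: of_real_mult of_real_of_nat_eq)
  also have "\<dots> = 1" using msum_pos[OF vB] by (simp del: of_nat_sum)
  finally have "ptr I dA J dB (emb I dA J dB a) i $$ (q,q') = a i $$ (q,q')" by simp
  then show "ptr I dA J dB (emb I dA J dB a) i $$ (q,q') = a i $$ (q,q')" .
qed

lemma emb_one_TP: "mm_valid J dB \<Longrightarrow> hom_TP I dA J dB (emb I dA J dB (mm_one I dA))"
  by (simp add: hom_TP_ptr ptr_emb mm_one_carrier)

lemma emb_one_pos: assumes vA: "mm_valid I dA" and vB: "mm_valid J dB"
  shows "mm_pos (J\<times>I) (hom_dim dA dB) (emb I dA J dB (mm_one I dA))"
  unfolding mm_pos_def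
proof (intro conjI emb_carrier ballI)
  fix b assume b: "b \<in> J\<times>I"
  obtain j i where ji: "b=(j,i)" "j\<in>J" "i\<in>I" using b by auto
  have d0: "0 < dA i" using vA ji by (simp add: mm_valid_def)
  show "psd_mat (hom_dim dA dB b) (emb I dA J dB (mm_one I dA) b)"
  proof (rule psd_herm_shift[where a="1 / real (\<Sum>j\<in>J. dB j)" and H="\<lambda>_ _. 0" and c=1])
    show "emb I dA J dB (mm_one I dA) b \<in> carrier_mat (hom_dim dA dB b) (hom_dim dA dB b)"
      using emb_carrier[of I dA J dB] b by (auto simp: mm_carrier_def)
    show "0 \<le> 1 / real (\<Sum>j\<in>J. dB j)" by (simp add: sum_nonneg)
    show "\<forall>r<hom_dim dA dB b. \<forall>s<hom_dim dA dB b. (0::complex) = cnj 0" by simp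
    show "(\<Sum>r<hom_dim dA dB b. \<Sum>s<hom_dim dA dB b. cmod 0) \<le> 1" by simp
    show "\<forall>r<hom_dim dA dB b. \<forall>s<hom_dim dA dB b. emb I dA J dB (mm_one I dA) b $$ (r, s) =
      complex_of_real (1 / real (\<Sum>j\<in>J. dB j)) * (0 + (if r = s then complex_of_real 1 else 0))"
    proof (intro allI impI)
      fix r s assume rs: "r < hom_dim dA dB b" "s < hom_dim dA dB b"
      have "(r div dA i = s div dA i \<and> r mod dA i = s mod dA i) \<longleftrightarrow> r = s"
        by (metis div_mult_mod_eq)
      then show "emb I dA J dB (mm_one I dA) b $$ (r, s) =
        complex_of_real (1 / real (\<Sum>j\<in>J. dB j)) * (0 + (if r = s then complex_of_real 1 else 0))"
        using rs ji d0 by (auto simp: emb_entry hom_dim_def mm_one_def)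
    qed
  qed
qed

lemma herm_kernel:
  fixes f :: "('j \<times> 'i \<Rightarrow> complex mat) \<Rightarrow> complex"
  assumes vA: "mm_valid I dA" and vB: "mm_valid J dB"
    and fadd: "\<forall>X\<in>mm_carrier (J\<times>I) (hom_dim dA dB). \<forall>Y\<in>mm_carrier (J\<times>I) (hom_dim dA dB). f (mm_add X Y) = f X + f Y"
    and fsm: "\<forall>c. \<forall>X\<in>mm_carrier (J\<times>I) (hom_dim dA dB). f (mm_smult c X) = c * f X"
    and f1: "\<forall>Z. mm_pos (J\<times>I) (hom_dim dA dB) Z \<and> hom_TP I dA J dB Z \<longrightarrow> f Z = 1"
    and H: "H \<in> mm_carrier (J\<times>I) (hom_dim dA dB)"
    and herm: "\<forall>b\<in>J\<times>I. \<forall>r<hom_dim dA dB b. \<forall>s<hom_dim dA dB b. H b $$ (s,r) = cnj (H b $$ (r,s))"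
    and kH: "\<forall>i\<in>I. \<forall>q<dA i. \<forall>q'<dA i. ptr I dA J dB H i $$ (q,q') = 0"
  shows "f H = 0"
proof -
  let ?C = "mm_carrier (J\<times>I) (hom_dim dA dB)"
  let ?h = "hom_dim dA dB"
  have finJI: "finite (J\<times>I)" using vA vB by (simp add: mm_valid_def)
  define m where "m = (\<Sum>j\<in>J. dB j)"
  have m0: "0 < m" using msum_pos[OF vB] by (simp add: m_def)
  define U where "U = box_one I dA J dB (mm_one I dA)"
  have Uc: "U \<in> ?C" by (simp add: U_def box_one_carrier)
  have U_entry: "U b $$ (r,s) = (if r = s then 1 else 0)" if b: "b\<in>J\<times>I" and rs: "r < ?h b" "s < ?h b" for b r s
  proof -
    obtain j i where ji: "b=(j,i)" "j\<in>J" "i\<in>I" using b by auto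
    have d0: "0 < dA i" using vA ji by (simp add: mm_valid_def)
    have "(r div dA i = s div dA i \<and> r mod dA i = s mod dA i) \<longleftrightarrow> r = s"
      by (metis div_mult_mod_eq)
    then show ?thesis using rs ji d0 by (auto simp: U_def box_one_app kron_entry hom_dim_def mm_one_def)
  qed
  have E: "emb I dA J dB (mm_one I dA) = mm_smult (complex_of_real (1/real m)) U" by (simp add: emb_def U_def m_def)
  have "1 = f (emb I dA J dB (mm_one I dA))" using f1 emb_one_pos[OF vA vB] emb_one_TP[OF vB, of I dA] by metis
  also have "\<dots> = complex_of_real (1/real m) * f U" using fsm Uc E by simp
  finally have fU1: "complex_of_real (1/real m) * f U = 1" by simp
  have fU: "f U = of_nat m"
  proof -
    have "f U = (complex_of_real (real m) * complex_of_real (1/real m)) * f U" using m0 by (simp flip: of_real_mult)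
    also have "\<dots> = of_nat m" using fU1 by (simp add: mult.assoc)
    finally show ?thesis .
  qed
  define c where "c = 1 + (\<Sum>b\<in>J\<times>I. \<Sum>r<?h b. \<Sum>s<?h b. cmod (H b $$ (r,s)))"
  have c1: "c \<ge> 1" unfolding c_def by (simp add: sum_nonneg)
  define Z where "Z = mm_smult (complex_of_real (1/(c * real m))) (mm_add H (mm_smult (complex_of_real c) U))"
  have Zc: "Z \<in> ?C" unfolding Z_def using H Uc by (intro mm_smult_carrier mm_add_carrier)
  have Z_entry: "Z b $$ (r,s) = complex_of_real (1/(c*real m)) * (H b $$ (r,s) + (if r = s then complex_of_real c else 0))"
    if b: "b\<in>J\<times>I" and rs: "r < ?h b" "s < ?h b" for b r s
  proof -
    have A: "mm_add H (mm_smult (complex_of_real c) U) \<in> ?C" using H Uc by (intro mm_add_carrier mm_smult_carrier)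
    have "Z b $$ (r,s) = complex_of_real (1/(c*real m)) * mm_add H (mm_smult (complex_of_real c) U) b $$ (r,s)"
      unfolding Z_def by (rule mm_smult_entry[OF A b rs])
    also have "\<dots> = complex_of_real (1/(c*real m)) * (H b $$ (r,s) + complex_of_real c * U b $$ (r,s))"
      by (simp only: mm_add_entry[OF H mm_smult_carrier[OF Uc] b rs] mm_smult_entry[OF Uc b rs])
    also have "\<dots> = complex_of_real (1/(c*real m)) * (H b $$ (r,s) + (if r = s then complex_of_real c else 0))"
      using U_entry[OF b rs] by simp
    finally show ?thesis .
  qed
  have Zpos: "mm_pos (J\<times>I) ?h Z"
    unfolding mm_pos_def
  proof (intro conjI Zc ballI)
    fix b assume b: "b \<in> J\<times>I"
    show "psd_mat (?h b) (Z b)"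
    proof (rule psd_herm_shift[where a="1/(c*real m)" and H="\<lambda>r s. H b $$ (r,s)" and c=c])
      show "Z b \<in> carrier_mat (?h b) (?h b)" using Zc b by (rule carrier_dim)
      show "0 \<le> 1/(c*real m)" using c1 by simp
      show "\<forall>r<?h b. \<forall>s<?h b. H b $$ (s,r) = cnj (H b $$ (r,s))" using herm b by blast
      have "(\<Sum>r<?h b. \<Sum>s<?h b. cmod (H b $$ (r,s))) \<le> (\<Sum>b\<in>J\<times>I. \<Sum>r<?h b. \<Sum>s<?h b. cmod (H b $$ (r,s)))"
        by (rule member_le_sum[OF b]) (auto intro!: sum_nonneg finJI)
      then show "(\<Sum>r<?h b. \<Sum>s<?h b. cmod (H b $$ (r,s))) \<le> c" unfolding c_def by linarith
      show "\<forall>r<?h b. \<forall>s<?h b. Z b $$ (r,s) = complex_of_real (1/(c*real m)) * (H b $$ (r,s) + (if r = s then complex_of_real c else 0))"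
        using Z_entry b by blast
    qed
  qed
  have ZTP: "hom_TP I dA J dB Z"
    unfolding hom_TP_ptr
  proof (rule mm_eqI[OF ptr_carrier mm_one_carrier])
    fix i q q' assume i: "i\<in>I" and q: "q < dA i" "q' < dA i"
    have "ptr I dA J dB Z i $$ (q,q') = (\<Sum>j\<in>J. \<Sum>p<dB j. Z (j,i) $$ (p*dA i + q, p*dA i + q'))"
      using i q by (simp add: ptr_entry)
    also have "\<dots> = (\<Sum>j\<in>J. \<Sum>p<dB j. complex_of_real (1/(c*real m)) * H (j,i) $$ (p*dA i + q, p*dA i + q')
         + complex_of_real (1/(c*real m)) * (if q = q' then complex_of_real c else 0))"
    proof (intro sum.cong refl)
      fix j p assume jp: "j \<in> J" "p \<in> {..<dB j}"
      have "p*dA i + q < ?h (j,i)" "p*dA i + q' < ?h (j,i)" using jp q by (auto simp: hom_dim_def intro: idx_lt)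
      then show "Z (j,i) $$ (p*dA i + q, p*dA i + q') = complex_of_real (1/(c*real m)) * H (j,i) $$ (p*dA i + q, p*dA i + q')
         + complex_of_real (1/(c*real m)) * (if q = q' then complex_of_real c else 0)"
        using jp i by (simp add: Z_entry distrib_left)
    qed
    also have "\<dots> = complex_of_real (1/(c*real m)) * ptr I dA J dB H i $$ (q,q')
        + (\<Sum>j\<in>J. of_nat (dB j) * (complex_of_real (1/(c*real m)) * (if q = q' then complex_of_real c else 0)))"
      using i q by (simp add: sum.distrib ptr_entry sum_distrib_left)
    also have "\<dots> = of_nat m * (complex_of_real (1/(c*real m)) * (if q = q' then complex_of_real c else 0))"
      using kH i q unfolding m_def by (simp only: of_nat_sum sum_distrib_right) simp
    also have "\<dots> = (if q = q' then 1 else 0)"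
    proof -
      have "of_nat m * (complex_of_real (1/(c*real m)) * complex_of_real c) = complex_of_real (real m * (1/(c*real m)) * c)"
        by (simp only: of_real_mult of_real_of_nat_eq mult.assoc)
      also have "\<dots> = 1" using m0 c1 by simp
      finally have key: "of_nat m * (complex_of_real (1/(c*real m)) * complex_of_real c) = 1" .
      show ?thesis
      proof (cases "q = q'")
        case True then show ?thesis by (simp only: True simp_thms if_True key)
      next
        case False then show ?thesis by simp
      qed
    qed
    also have "\<dots> = mm_one I dA i $$ (q,q')" using i q by (simp add: mm_one_def)
    finally show "ptr I dA J dB Z i $$ (q,q') = mm_one I dA i $$ (q,q')" .
  qed
  have "1 = f Z" using f1 Zpos ZTP by simp
  also have "\<dots> = complex_of_real (1/(c*real m)) * (f H + complex_of_real c * f U)"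
  proof -
    have B: "mm_smult (complex_of_real c) U \<in> ?C" using Uc by (rule mm_smult_carrier)
    have A: "mm_add H (mm_smult (complex_of_real c) U) \<in> ?C" using H B by (rule mm_add_carrier)
    show ?thesis unfolding Z_def
      by (simp only: fsm[rule_format, OF A] fadd[rule_format, OF H B] fsm[rule_format, OF Uc])
  qed
  also have "\<dots> = complex_of_real (1/(c*real m)) * f H + 1"
  proof -
    have "complex_of_real (1/(c*real m)) * (complex_of_real c * of_nat m) = complex_of_real (1/(c*real m) * c * real m)"
      by (simp only: of_real_mult of_real_of_nat_eq mult.assoc)
    also have "\<dots> = 1" using m0 c1 by simp
    finally show ?thesis using fU by (simp add: distrib_left)
  qed
  finally have "complex_of_real (1/(c*real m)) * f H = 0" by simp
  then show "f H = 0" using m0 c1 by simp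
qed

lemma kernel:
  fixes f :: "('j \<times> 'i \<Rightarrow> complex mat) \<Rightarrow> complex"
  assumes vA: "mm_valid I dA" and vB: "mm_valid J dB"
    and fadd: "\<forall>X\<in>mm_carrier (J\<times>I) (hom_dim dA dB). \<forall>Y\<in>mm_carrier (J\<times>I) (hom_dim dA dB). f (mm_add X Y) = f X + f Y"
    and fsm: "\<forall>c. \<forall>X\<in>mm_carrier (J\<times>I) (hom_dim dA dB). f (mm_smult c X) = c * f X"
    and f1: "\<forall>Z. mm_pos (J\<times>I) (hom_dim dA dB) Z \<and> hom_TP I dA J dB Z \<longrightarrow> f Z = 1"
    and Y: "Y \<in> mm_carrier (J\<times>I) (hom_dim dA dB)"
    and kY: "\<forall>i\<in>I. \<forall>q<dA i. \<forall>q'<dA i. ptr I dA J dB Y i $$ (q,q') = 0"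
  shows "f Y = 0"
proof -
  let ?C = "mm_carrier (J\<times>I) (hom_dim dA dB)"
  let ?h = "hom_dim dA dB"
  define Yh where "Yh = (\<lambda>b. mat (dim_row (Y b)) (dim_col (Y b)) (\<lambda>(r,s). cnj (Y b $$ (s,r))))"
  have Yhc: "Yh \<in> ?C"
    unfolding mm_carrier_def mem_Collect_eq
  proof (intro conjI ballI allI impI)
    fix b assume b: "b \<in> J\<times>I"
    show "Yh b \<in> carrier_mat (?h b) (?h b)" using carrier_dim[OF Y b] by (simp add: Yh_def)
  next
    fix b assume b: "b \<notin> J\<times>I"
    then have "Y b = 0\<^sub>m 0 0" using Y unfolding mm_carrier_def by blast
    then show "Yh b = 0\<^sub>m 0 0" by (simp add: Yh_def) (rule eq_matI, auto)
  qed
  have Yh_entry: "Yh b $$ (r,s) = cnj (Y b $$ (s,r))" if "b\<in>J\<times>I" "r < ?h b" "s < ?h b" for b r s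
    using carrier_dim[OF Y that(1)] that by (simp add: Yh_def)
  define H1 where "H1 = mm_smult (1/2) (mm_add Y Yh)"
  define H2 where "H2 = mm_smult (-\<i>/2) (mm_add Y (mm_smult (-1) Yh))"
  have Yhm: "mm_smult (-1) Yh \<in> ?C" using Yhc by (rule mm_smult_carrier)
  have A1: "mm_add Y Yh \<in> ?C" using Y Yhc by (rule mm_add_carrier)
  have A2: "mm_add Y (mm_smult (-1) Yh) \<in> ?C" using Y Yhm by (rule mm_add_carrier)
  have H1c: "H1 \<in> ?C" unfolding H1_def using A1 by (rule mm_smult_carrier)
  have H2c: "H2 \<in> ?C" unfolding H2_def using A2 by (rule mm_smult_carrier)
  have H1e: "H1 b $$ (r,s) = 1/2 * (Y b $$ (r,s) + cnj (Y b $$ (s,r)))" if "b\<in>J\<times>I" "r < ?h b" "s < ?h b" for b r s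
    unfolding H1_def
    by (simp only: mm_smult_entry[OF A1 that] mm_add_entry[OF Y Yhc that] Yh_entry[OF that])
  have H2e: "H2 b $$ (r,s) = -\<i>/2 * (Y b $$ (r,s) + -1 * cnj (Y b $$ (s,r)))" if "b\<in>J\<times>I" "r < ?h b" "s < ?h b" for b r s
    unfolding H2_def
    by (simp only: mm_smult_entry[OF A2 that] mm_add_entry[OF Y Yhm that] mm_smult_entry[OF Yhc that] Yh_entry[OF that])
  have herm1: "\<forall>b\<in>J\<times>I. \<forall>r<?h b. \<forall>s<?h b. H1 b $$ (s,r) = cnj (H1 b $$ (r,s))"
    by (simp add: H1e algebra_simps)
  have herm2: "\<forall>b\<in>J\<times>I. \<forall>r<?h b. \<forall>s<?h b. H2 b $$ (s,r) = cnj (H2 b $$ (r,s))"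
    by (simp add: H2e algebra_simps)
  have idx: "p*dA i + q < ?h (j,i)" if "j\<in>J" "p < dB j" "q < dA i" for j p i q
    using that by (auto simp: hom_dim_def intro: idx_lt)
  have k1: "\<forall>i\<in>I. \<forall>q<dA i. \<forall>q'<dA i. ptr I dA J dB H1 i $$ (q,q') = 0"
  proof (intro ballI allI impI)
    fix i q q' assume i: "i \<in> I" and q: "q < dA i" "q' < dA i"
    have "ptr I dA J dB H1 i $$ (q,q') = (\<Sum>j\<in>J. \<Sum>p<dB j. 1/2 * (Y (j,i) $$ (p*dA i+q, p*dA i+q') + cnj (Y (j,i) $$ (p*dA i+q', p*dA i+q))))"
      using i q by (simp add: ptr_entry H1e idx)
    also have "\<dots> = 1/2 * (ptr I dA J dB Y i $$ (q,q') + cnj (ptr I dA J dB Y i $$ (q',q)))"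
      using i q by (simp add: ptr_entry sum_distrib_left sum.distrib distrib_left)
    also have "\<dots> = 0" using kY i q by simp
    finally show "ptr I dA J dB H1 i $$ (q,q') = 0" .
  qed
  have k2: "\<forall>i\<in>I. \<forall>q<dA i. \<forall>q'<dA i. ptr I dA J dB H2 i $$ (q,q') = 0"
  proof (intro ballI allI impI)
    fix i q q' assume i: "i \<in> I" and q: "q < dA i" "q' < dA i"
    have "ptr I dA J dB H2 i $$ (q,q') = (\<Sum>j\<in>J. \<Sum>p<dB j. -\<i>/2 * (Y (j,i) $$ (p*dA i+q, p*dA i+q') + -1 * cnj (Y (j,i) $$ (p*dA i+q', p*dA i+q))))"
      using i q by (simp only: ptr_entry H2e idx) (intro sum.cong refl; simp add: H2e idx)
    also have "\<dots> = -\<i>/2 * ((\<Sum>j\<in>J. \<Sum>p<dB j. Y (j,i) $$ (p*dA i+q, p*dA i+q')) + -1 * (\<Sum>j\<in>J. \<Sum>p<dB j. cnj (Y (j,i) $$ (p*dA i+q', p*dA i+q))))"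
      by (simp only: sum.distrib sum_distrib_left[symmetric])
    also have "\<dots> = -\<i>/2 * (ptr I dA J dB Y i $$ (q,q') + -1 * cnj (ptr I dA J dB Y i $$ (q',q)))"
      by (simp only: ptr_entry[where I=I and dA=dA and J=J and dB=dB and X=Y and q=q and q'=q', OF i q(1) q(2)] ptr_entry[where I=I and dA=dA and J=J and dB=dB and X=Y and q=q' and q'=q, OF i q(2) q(1)] cnj_sum)
    also have "\<dots> = 0" using kY i q by simp
    finally show "ptr I dA J dB H2 i $$ (q,q') = 0" .
  qed
  have f1H: "f H1 = 0" by (rule herm_kernel[OF vA vB fadd fsm f1 H1c herm1 k1])
  have f2H: "f H2 = 0" by (rule herm_kernel[OF vA vB fadd fsm f1 H2c herm2 k2])
  have e1: "f H1 = 1/2 * (f Y + f Yh)" unfolding H1_def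
    by (simp only: fsm[rule_format, OF A1] fadd[rule_format, OF Y Yhc])
  have e2: "f H2 = -\<i>/2 * (f Y + -1 * f Yh)" unfolding H2_def
    by (simp only: fsm[rule_format, OF A2] fadd[rule_format, OF Y Yhm] fsm[rule_format, OF Yhc])
  have "f Y = f H1 + \<i> * f H2" unfolding e1 e2 by (simp add: field_simps)
  then show ?thesis using f1H f2H by simp
qed

theorem lemma3p3:
  fixes I :: "'a set" and dA :: "'a \<Rightarrow> nat"
    and J :: "'b set" and dB :: "'b \<Rightarrow> nat"
    and K :: "'c set" and dC :: "'c \<Rightarrow> nat"
    and L :: "'d set" and dD :: "'d \<Rightarrow> nat"
    and S :: "('b \<times> 'a \<Rightarrow> complex mat) \<Rightarrow> ('d \<times> 'c \<Rightarrow> complex mat)"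
  assumes "mm_valid I dA" and "mm_valid J dB" and "mm_valid K dC" and "mm_valid L dD"
    and "det_supermap I dA J dB K dC L dD S"
  shows "\<exists>N :: ('a \<Rightarrow> complex mat) \<Rightarrow> ('c \<Rightarrow> complex mat).
           mm_CP I dA K dC N \<and> mm_unital I dA K dC N \<and>
           (\<forall>S_dual N_dual.
              mm_dual (J \<times> I) (hom_dim dA dB) (L \<times> K) (hom_dim dC dD) S S_dual \<longrightarrow>
              mm_dual I dA K dC N N_dual \<longrightarrow>
              (\<forall>\<rho>. mm_pos K dC \<rho> \<and> mm_trace K \<rho> = 1 \<longrightarrow>
                 S_dual (box_one K dC L dD \<rho>) = box_one I dA J dB (N_dual \<rho>)))"
proof -
  have vA: "mm_valid I dA" and vB: "mm_valid J dB" and vC: "mm_valid K dC" and vD: "mm_valid L dD"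
    using assms by auto
  have finI: "finite I" and finJ: "finite J" and finK: "finite K" and finL: "finite L"
    using vA vB vC vD by (auto simp: mm_valid_def)
  let ?CA = "mm_carrier (J\<times>I) (hom_dim dA dB)"
  let ?CC = "mm_carrier (L\<times>K) (hom_dim dC dD)"
  have SCP: "mm_CP (J\<times>I) (hom_dim dA dB) (L\<times>K) (hom_dim dC dD) S"
    and STP: "\<forall>X. mm_pos (J\<times>I) (hom_dim dA dB) X \<and> hom_TP I dA J dB X \<longrightarrow> hom_TP K dC L dD (S X)"
    using assms(5) by (simp_all add: det_supermap_def)
  have SL: "mm_linear (J\<times>I) (hom_dim dA dB) (L\<times>K) (hom_dim dC dD) S" using SCP by (simp add: mm_CP_def)
  have Sc: "\<And>X. X \<in> ?CA \<Longrightarrow> S X \<in> ?CC" using SL by (simp add: mm_linear_def)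
  have Sadd: "\<And>X Y. X \<in> ?CA \<Longrightarrow> Y \<in> ?CA \<Longrightarrow> S (mm_add X Y) = mm_add (S X) (S Y)" using SL by (simp add: mm_linear_def)
  have Ssm: "\<And>c X. X \<in> ?CA \<Longrightarrow> S (mm_smult c X) = mm_smult c (S X)" using SL by (simp add: mm_linear_def)
  define N where "N = (\<lambda>a. ptr K dC L dD (S (emb I dA J dB a)))"
  have NCP: "mm_CP I dA K dC N"
    unfolding N_def using CP_comp[OF CP_comp[OF emb_CP[OF vA] SCP] ptr_CP[OF vC vD]] by simp
  have Nun: "mm_unital I dA K dC N"
  proof -
    have "hom_TP K dC L dD (S (emb I dA J dB (mm_one I dA)))"
      using STP emb_one_pos[OF vA vB] emb_one_TP[OF vB, of I dA] by blast
    then show ?thesis unfolding mm_unital_def N_def hom_TP_ptr .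
  qed
  show ?thesis
  proof (intro exI[of _ N] conjI NCP Nun allI impI)
    fix S_dual N_dual \<rho>
    assume Sd: "mm_dual (J \<times> I) (hom_dim dA dB) (L \<times> K) (hom_dim dC dD) S S_dual"
      and Nd: "mm_dual I dA K dC N N_dual"
      and \<rho>: "mm_pos K dC \<rho> \<and> mm_trace K \<rho> = 1"
    have \<rho>c: "\<rho> \<in> mm_carrier K dC" using \<rho> by (simp add: mm_pos_def)
    define B\<rho> where "B\<rho> = box_one K dC L dD \<rho>"
    have Bc: "B\<rho> \<in> ?CC" by (simp add: B\<rho>_def box_one_carrier)
    define f where "f X = mm_trace (L\<times>K) (mm_mult B\<rho> (S X))" for X
    have fadd: "\<forall>X\<in>?CA. \<forall>Y\<in>?CA. f (mm_add X Y) = f X + f Y"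
      unfolding f_def using Sadd Sc trace_mult_add[OF Bc] by simp
    have fsm: "\<forall>c. \<forall>X\<in>?CA. f (mm_smult c X) = c * f X"
      unfolding f_def using Ssm Sc trace_mult_smult[OF Bc] by simp
    have f1: "\<forall>Z. mm_pos (J\<times>I) (hom_dim dA dB) Z \<and> hom_TP I dA J dB Z \<longrightarrow> f Z = 1"
    proof (intro allI impI)
      fix Z assume Z: "mm_pos (J\<times>I) (hom_dim dA dB) Z \<and> hom_TP I dA J dB Z"
      have SZc: "S Z \<in> ?CC" using Z Sc by (simp add: mm_pos_def)
      have "ptr K dC L dD (S Z) = mm_one K dC" using STP Z by (simp add: hom_TP_ptr)
      then have "f Z = mm_trace K (mm_mult \<rho> (mm_one K dC))"
        unfolding f_def B\<rho>_def using trace_box[OF \<rho>c SZc finK finL] by simp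
      also have "\<dots> = 1" using trace_one[OF \<rho>c] \<rho> by simp
      finally show "f Z = 1" .
    qed
    have \<sigma>c: "N_dual \<rho> \<in> mm_carrier I dA" using Nd \<rho>c by (simp add: mm_dual_def)
    have finJI: "finite (J\<times>I)" using finI finJ by simp
    show "S_dual (box_one K dC L dD \<rho>) = box_one I dA J dB (N_dual \<rho>)"
      unfolding B\<rho>_def[symmetric]
    proof (rule trace_nondeg[OF _ box_one_carrier finJI])
      show "S_dual B\<rho> \<in> ?CA" using Sd Bc by (simp add: mm_dual_def)
      show "\<forall>X\<in>?CA. mm_trace (J\<times>I) (mm_mult (S_dual B\<rho>) X) = mm_trace (J\<times>I) (mm_mult (box_one I dA J dB (N_dual \<rho>)) X)"
      proof
        fix X assume X: "X \<in> ?CA"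
        have l: "mm_trace (J\<times>I) (mm_mult (S_dual B\<rho>) X) = f X"
          using Sd X Bc unfolding f_def mm_dual_def by blast
        define E where "E = emb I dA J dB (ptr I dA J dB X)"
        have Ec: "E \<in> ?CA" by (simp add: E_def emb_carrier)
        have SEc: "S E \<in> ?CC" using Sc Ec by blast
        have "mm_trace (J\<times>I) (mm_mult (box_one I dA J dB (N_dual \<rho>)) X) = mm_trace I (mm_mult (N_dual \<rho>) (ptr I dA J dB X))"
          by (rule trace_box[OF \<sigma>c X finI finJ])
        also have "\<dots> = mm_trace K (mm_mult \<rho> (N (ptr I dA J dB X)))"
          using Nd \<rho>c ptr_carrier unfolding mm_dual_def by blast
        also have "\<dots> = mm_trace K (mm_mult \<rho> (ptr K dC L dD (S E)))" by (simp add: N_def E_def)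
        also have "\<dots> = f E"
          unfolding f_def B\<rho>_def using trace_box[OF \<rho>c SEc finK finL] by simp
        finally have r: "mm_trace (J\<times>I) (mm_mult (box_one I dA J dB (N_dual \<rho>)) X) = f E" .
        define Y where "Y = mm_add X (mm_smult (-1) E)"
        have Em: "mm_smult (-1) E \<in> ?CA" using Ec by (rule mm_smult_carrier)
        have Yc: "Y \<in> ?CA" unfolding Y_def using X Em by (rule mm_add_carrier)
        have pE: "ptr I dA J dB E = ptr I dA J dB X" unfolding E_def by (rule ptr_emb[OF ptr_carrier vB])
        have PL: "mm_linear (J\<times>I) (hom_dim dA dB) I dA (ptr I dA J dB)" by (rule ptr_linear)
        have "ptr I dA J dB Y = mm_add (ptr I dA J dB X) (mm_smult (-1) (ptr I dA J dB X))"
          unfolding Y_def using PL X Em Ec pE by (simp add: mm_linear_def)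
        then have kY: "\<forall>i\<in>I. \<forall>q<dA i. \<forall>q'<dA i. ptr I dA J dB Y i $$ (q,q') = 0"
          by (simp add: mm_add_entry[OF ptr_carrier mm_smult_carrier[OF ptr_carrier]] mm_smult_entry[OF ptr_carrier])
        have "f Y = 0" by (rule kernel[OF vA vB fadd fsm f1 Yc kY])
        moreover have "f Y = f X + -1 * f E" unfolding Y_def
          by (simp only: fadd[rule_format, OF X Em] fsm[rule_format, OF Ec])
        ultimately have "f X = f E" by simp
        then show "mm_trace (J\<times>I) (mm_mult (S_dual B\<rho>) X) = mm_trace (J\<times>I) (mm_mult (box_one I dA J dB (N_dual \<rho>)) X)"
          using l r by simp
      qed
    qed
  qed
qed

end
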